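(* Let $a\in[0,1/2]$, $p\in[1,2)$ and $\mu\ge-a^2$. Let \[ \lambda_{a,p}(\mu)=\inf\Big\{\|\psi'-i\,a\,\psi\|_{\mathrm L^2(\mathbb S^1)}^2+\mu\,\|\psi\|_{\mathrm L^p(\mathbb S^1)}^2\,:\,\psi\in\mathrm H^1(\mathbb S^1,\mathbb C),\ \|\psi\|_{\mathrm L^2(\mathbb S^1)}=1\Big\}. \] Then this infimum is achieved by at least one function $\psi\in\mathrm H^1(\mathbb S^1,\mathbb C)$ with $\|\psi\|_{\mathrm L^2(\mathbb S^1)}=1$, i.e. equality holds for some nonzero function in the inequality $\|\psi'-ia\psi\|_2^2+\mu\|\psi\|_p^2\ge\lambda_{a,p}(\mu)\|\psi\|_2^2$.
   Context: $\mathbb S^1\approx[-\pi,\pi)$ with uniform probability measure $d\theta/(2\pi)$; norms on $\mathbb S^1$ are with respect to it. $\mathrm H^1(\mathbb S^1,\mathbb C)$ is the space of $2\pi$-periodic complex-valued functions with derivative in $\mathrm L^2$. *)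

theory Defs
  imports "HOL-Analysis.Analysis"
begin

text \<open>The circle S^1 is identified with [-pi,pi), functions on it with 2pi-periodic
functions real => complex. Norms are with respect to the uniform probability
measure d theta/(2 pi).\<close>

definition H1_with_deriv :: "(real \<Rightarrow> complex) \<Rightarrow> (real \<Rightarrow> complex) \<Rightarrow> bool" where
  "H1_with_deriv \<psi> g \<longleftrightarrow>
     (\<forall>x. \<psi> (x + 2 * pi) = \<psi> x) \<and>
     set_borel_measurable lborel {-pi..pi} g \<and>
     set_integrable lborel {-pi..pi} (\<lambda>x. (cmod (g x))\<^sup>2) \<and>
     (\<forall>x\<in>{-pi..pi}. \<psi> x = \<psi> (-pi) + (LINT t:{-pi..x}|lborel. g t))"

definition circ_mean_pow :: "real \<Rightarrow> (real \<Rightarrow> complex) \<Rightarrow> real" where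
  "circ_mean_pow p f = (LINT x:{-pi..pi}|lborel. (cmod (f x)) powr p) / (2 * pi)"

definition Lp_norm_sq :: "real \<Rightarrow> (real \<Rightarrow> complex) \<Rightarrow> real" where
  "Lp_norm_sq p f = (circ_mean_pow p f) powr (2 / p)"

definition energy :: "real \<Rightarrow> real \<Rightarrow> real \<Rightarrow> (real \<Rightarrow> complex) \<Rightarrow> (real \<Rightarrow> complex) \<Rightarrow> real" where
  "energy a p \<mu> \<psi> g =
     (LINT x:{-pi..pi}|lborel. (cmod (g x - \<i> * complex_of_real a * \<psi> x))\<^sup>2) / (2 * pi)
     + \<mu> * Lp_norm_sq p \<psi>"

definition admissible :: "(real \<Rightarrow> complex) \<Rightarrow> (real \<Rightarrow> complex) \<Rightarrow> bool" where
  "admissible \<psi> g \<longleftrightarrow> H1_with_deriv \<psi> g \<and> circ_mean_pow 2 \<psi> = 1"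

definition lambda_ap :: "real \<Rightarrow> real \<Rightarrow> real \<Rightarrow> real" where
  "lambda_ap a p \<mu> = Inf {energy a p \<mu> \<psi> g | \<psi> g. admissible \<psi> g}"

end

theory Submission
  imports Defs "HOL-Complex_Analysis.Great_Picard"
begin

lemma sq_ge: fixes c :: real shows "c \<le> c\<^sup>2 + 1"
proof -
  have "0 \<le> (c - 1/2)\<^sup>2" by simp
  then show ?thesis by (simp add: power2_eq_square algebra_simps)
qed
lemma amgm: fixes c d :: real assumes "d > 0" shows "c \<le> c\<^sup>2 / (2*d) + d/2"
proof -
  have "0 \<le> (c - d)\<^sup>2" by simp
  then have "2*d*c \<le> c\<^sup>2 + d\<^sup>2" by (simp add: power2_eq_square algebra_simps)
  then show ?thesis using assms by (simp add: field_simps power2_eq_square)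
qed

abbreviation II :: "real set" where "II \<equiv> {-pi..pi}"

lemma sbm_comp:
  fixes f :: "real \<Rightarrow> 'b::real_normed_vector" and h :: "'b \<Rightarrow> 'c::real_normed_vector"
  assumes "set_borel_measurable lborel A f" "continuous_on UNIV h" "h 0 = 0"
  shows "set_borel_measurable lborel A (\<lambda>x. h (f x))"
proof -
  have eq: "(\<lambda>x. indicator A x *\<^sub>R h (f x)) = (\<lambda>x. h (indicator A x *\<^sub>R f x))"
    by (rule ext) (simp add: indicator_def assms(3))
  have meas: "(\<lambda>x. h (indicator A x *\<^sub>R f x)) \<in> borel_measurable lborel"
    by (rule borel_measurable_continuous_on[OF assms(2)])
      (use assms(1) in \<open>simp add: set_borel_measurable_def\<close>)
  show ?thesis unfolding set_borel_measurable_def eq by (rule meas)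
qed

lemma sbm_add:
  fixes f g :: "real \<Rightarrow> 'b::{real_normed_vector, second_countable_topology}"
  assumes "set_borel_measurable lborel A f" "set_borel_measurable lborel A g"
  shows "set_borel_measurable lborel A (\<lambda>x. f x + g x)"
  using borel_measurable_add[OF assms[unfolded set_borel_measurable_def]]
  unfolding set_borel_measurable_def by (simp add: scaleR_add_right)

lemma sbm_diff:
  fixes f g :: "real \<Rightarrow> 'b::{real_normed_vector, second_countable_topology}"
  assumes "set_borel_measurable lborel A f" "set_borel_measurable lborel A g"
  shows "set_borel_measurable lborel A (\<lambda>x. f x - g x)"
  using borel_measurable_diff[OF assms[unfolded set_borel_measurable_def]]
  unfolding set_borel_measurable_def by (simp add: scaleR_diff_right)

lemma sbm_cmult:
  fixes f :: "real \<Rightarrow> complex"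
  assumes "set_borel_measurable lborel A f"
  shows "set_borel_measurable lborel A (\<lambda>x. c * f x)"
proof -
  have eq: "(\<lambda>x. indicator A x *\<^sub>R (c * f x)) = (\<lambda>x. c * (indicator A x *\<^sub>R f x))"
    by (auto simp: indicator_def)
  have meas: "(\<lambda>x. c * (indicator A x *\<^sub>R f x)) \<in> borel_measurable lborel"
    by (rule borel_measurable_times[OF borel_measurable_const])
       (use assms in \<open>simp add: set_borel_measurable_def\<close>)
  show ?thesis unfolding set_borel_measurable_def eq by (rule meas)
qed

lemma cont_sbm:
  fixes f :: "real \<Rightarrow> 'b::real_normed_vector"
  assumes "continuous_on II f"
  shows "set_borel_measurable lborel II f"
  unfolding set_borel_measurable_def
  using borel_measurable_continuous_on_indicator[OF _ assms] by simp

lemma cont_sint: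
  fixes f :: "real \<Rightarrow> 'b::{banach, second_countable_topology}"
  assumes "continuous_on II f"
  shows "set_integrable lborel II f"
  unfolding set_integrable_def
  by (rule borel_integrable_compact[OF _ assms]) simp

lemma sint_bound:
  fixes f :: "real \<Rightarrow> 'b::{banach, second_countable_topology}" and w :: "real \<Rightarrow> real"
  assumes "set_borel_measurable lborel A f" "set_integrable lborel A w"
    "\<And>x. x \<in> A \<Longrightarrow> norm (f x) \<le> w x"
  shows "set_integrable lborel A f"
  unfolding set_integrable_def
proof (rule Bochner_Integration.integrable_bound)
  show "integrable lborel (\<lambda>x. indicator A x *\<^sub>R w x)" using assms(2) by (simp add: set_integrable_def)
  show "(\<lambda>x. indicator A x *\<^sub>R f x) \<in> borel_measurable lborel" using assms(1) by (simp add: set_borel_measurable_def)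
  show "AE x in lborel. norm (indicator A x *\<^sub>R f x) \<le> norm (indicator A x *\<^sub>R w x)"
  proof (intro AE_I2)
    fix x show "norm (indicator A x *\<^sub>R f x) \<le> norm (indicator A x *\<^sub>R w x)"
    proof (cases "x \<in> A")
      case True
      then have "norm (f x) \<le> \<bar>w x\<bar>" using assms(3)[of x] by linarith
      then show ?thesis using True by simp
    qed simp
  qed
qed

lemma L2_imp_L1:
  fixes g :: "real \<Rightarrow> complex"
  assumes "set_borel_measurable lborel II g" "set_integrable lborel II (\<lambda>x. (cmod (g x))\<^sup>2)"
  shows "set_integrable lborel II g"
proof (rule sint_bound[OF assms(1)])
  show "set_integrable lborel II (\<lambda>x. (cmod (g x))\<^sup>2 + 1)"
    using set_integral_add(1)[OF assms(2) cont_sint[of "\<lambda>_. 1::real"]] by simp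
  show "cmod (g x) \<le> (cmod (g x))\<^sup>2 + 1" for x
    by (rule sq_ge)
qed


lemma sint_mono_set:
  fixes f :: "real \<Rightarrow> real"
  assumes "set_integrable lborel A f" "B \<in> sets lborel" "B \<subseteq> A" "\<And>x. x \<in> A \<Longrightarrow> 0 \<le> f x"
  shows "set_lebesgue_integral lborel B f \<le> set_lebesgue_integral lborel A f"
proof -
  have iB: "set_integrable lborel B f" by (rule set_integrable_subset[OF assms(1-3)])
  show ?thesis unfolding set_lebesgue_integral_def
  proof (rule integral_mono)
    show "integrable lborel (\<lambda>x. indicator B x *\<^sub>R f x)" using iB by (simp add: set_integrable_def)
    show "integrable lborel (\<lambda>x. indicator A x *\<^sub>R f x)" using assms(1) by (simp add: set_integrable_def)
    fix x show "indicator B x *\<^sub>R f x \<le> indicator A x *\<^sub>R f x"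
    proof (cases "x \<in> B")
      case True then show ?thesis using assms(3) assms(4)[of x] by (simp add: subset_iff)
    next
      case False then show ?thesis using assms(4)[of x] by (simp add: indicator_def)
    qed
  qed
qed

definition K2 :: "(real \<Rightarrow> complex) \<Rightarrow> real" where
  "K2 g = (LINT x:II|lborel. (cmod (g x))\<^sup>2)"

lemma H1_parts:
  assumes "H1_with_deriv \<psi> g"
  shows "set_integrable lborel II g" "set_integrable lborel II (\<lambda>x. (cmod (g x))\<^sup>2)"
    "set_borel_measurable lborel II g" "\<And>x. \<psi> (x + 2*pi) = \<psi> x"
    "\<And>x. x \<in> II \<Longrightarrow> \<psi> x = \<psi> (-pi) + (LINT t:{-pi..x}|lborel. g t)"
proof -
  have h: "(\<forall>x. \<psi> (x + 2 * pi) = \<psi> x)" "set_borel_measurable lborel II g"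
     "set_integrable lborel II (\<lambda>x. (cmod (g x))\<^sup>2)"
     "(\<forall>x\<in>II. \<psi> x = \<psi> (-pi) + (LINT t:{-pi..x}|lborel. g t))"
    using assms unfolding H1_with_deriv_def by blast+
  show "set_integrable lborel II g" by (rule L2_imp_L1[OF h(2,3)])
  show "set_integrable lborel II (\<lambda>x. (cmod (g x))\<^sup>2)" "set_borel_measurable lborel II g"
    by (fact h(3)) (fact h(2))
  show "\<psi> (x + 2*pi) = \<psi> x" for x using h(1) by blast
  show "x \<in> II \<Longrightarrow> \<psi> x = \<psi> (-pi) + (LINT t:{-pi..x}|lborel. g t)" for x using h(4) by blast
qed

lemma K2_nonneg: "set_integrable lborel II (\<lambda>x. (cmod (g x))\<^sup>2) \<Longrightarrow> 0 \<le> K2 g"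
  unfolding K2_def set_lebesgue_integral_def by (rule integral_nonneg_AE) (simp add: indicator_def)

lemma H1_diff:
  assumes H: "H1_with_deriv \<psi> g" and xy: "-pi \<le> y" "y \<le> x" "x \<le> pi" and d: "0 < d"
  shows "cmod (\<psi> x - \<psi> y) \<le> K2 g / (2*d) + d/2 * (x - y)"
proof -
  note P = H1_parts[OF H]
  have s1: "{-pi..y} \<subseteq> II" "{y<..x} \<subseteq> II" using xy by auto
  have gy: "set_integrable lborel {-pi..y} g" by (rule set_integrable_subset[OF P(1) _ s1(1)]) auto
  have gyx: "set_integrable lborel {y<..x} g" by (rule set_integrable_subset[OF P(1) _ s1(2)]) auto
  have g2yx: "set_integrable lborel {y<..x} (\<lambda>x. (cmod (g x))\<^sup>2)"
    by (rule set_integrable_subset[OF P(2) _ s1(2)]) auto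
  have cyx: "set_integrable lborel {y<..x} (\<lambda>_. d/2)"
    by (rule set_integrable_subset[OF cont_sint _ s1(2)]) auto
  have un: "{-pi..x} = {-pi..y} \<union> {y<..x}" using xy by auto
  have "(LINT t:{-pi..x}|lborel. g t) = (LINT t:{-pi..y}|lborel. g t) + (LINT t:{y<..x}|lborel. g t)"
    unfolding un by (rule set_integral_Un[OF _ gy gyx]) auto
  moreover have "\<psi> x = \<psi> (-pi) + (LINT t:{-pi..x}|lborel. g t)" "\<psi> y = \<psi> (-pi) + (LINT t:{-pi..y}|lborel. g t)"
    by (rule P(5), use xy in simp)+
  ultimately have eq: "\<psi> x - \<psi> y = (LINT t:{y<..x}|lborel. g t)" by simp
  have "cmod (\<psi> x - \<psi> y) \<le> (LINT t:{y<..x}|lborel. cmod (g t))"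
    unfolding eq by (rule set_integral_norm_bound[OF gyx])
  also have "\<dots> \<le> (LINT t:{y<..x}|lborel. (1/(2*d)) * (cmod (g t))\<^sup>2 + d/2)"
  proof (rule set_integral_mono)
    show "set_integrable lborel {y<..x} (\<lambda>t. cmod (g t))"
      using gyx by (simp add: set_integrable_norm)
    show "set_integrable lborel {y<..x} (\<lambda>t. (1/(2*d)) * (cmod (g t))\<^sup>2 + d/2)"
      by (rule set_integral_add(1)[OF set_integrable_mult_right[OF g2yx] cyx])
    fix t show "cmod (g t) \<le> (1/(2*d)) * (cmod (g t))\<^sup>2 + d/2"
      using amgm[OF d, of "cmod (g t)"] by simp
  qed
  also have "\<dots> = (1/(2*d)) * (LINT t:{y<..x}|lborel. (cmod (g t))\<^sup>2) + d/2 * (x - y)"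
  proof -
    have i1: "(LINT t:{y<..x}|lborel. (1/(2*d)) * (cmod (g t))\<^sup>2 + d/2) =
      (LINT t:{y<..x}|lborel. (1/(2*d)) * (cmod (g t))\<^sup>2) + (LINT t:{y<..x}|lborel. d/2)"
      by (rule set_integral_add(2)[OF set_integrable_mult_right[OF g2yx] cyx])
    have i2: "(LINT t:{y<..x}|lborel. (1/(2*d)) * (cmod (g t))\<^sup>2) = (1/(2*d)) * (LINT t:{y<..x}|lborel. (cmod (g t))\<^sup>2)"
      by (rule set_integral_mult_right)
    have m: "measure lborel {y<..x} = x - y" using measure_lborel_Ioc[OF xy(2)] by simp
    have i3: "(LINT t:{y<..x}|lborel. d/2) = d/2 * (x - y)"
      by (subst set_integral_const) (use xy(2) m in \<open>simp_all add: emeasure_lborel_Ioc\<close>)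
    show ?thesis using i1 i2 i3 by simp
  qed
  also have "\<dots> \<le> (1/(2*d)) * K2 g + d/2 * (x - y)"
  proof -
    have "(LINT t:{y<..x}|lborel. (cmod (g t))\<^sup>2) \<le> K2 g"
      unfolding K2_def by (rule sint_mono_set[OF P(2) _ s1(2)]) simp_all
    then show ?thesis using d by (simp add: divide_right_mono)
  qed
  finally show ?thesis by simp
qed


lemma young_p:
  fixes t p :: real
  assumes "0 \<le> t" "0 < p" "p < 2"
  shows "t powr p \<le> (p/2) * t\<^sup>2 + (1 - p/2)"
proof -
  have "t powr p * 1 \<le> (t powr p) powr (2/p) / (2/p) + 1 powr (2/(2-p)) / (2/(2-p))"
    by (rule Youngs_inequality) (use assms in \<open>auto simp: field_simps\<close>)
  also have "(t powr p) powr (2/p) = t\<^sup>2"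
    using assms by (simp add: powr_powr powr_numeral)
  finally show ?thesis by (simp add: field_simps)
qed

lemma cmp2: "circ_mean_pow 2 f = (LINT x:II|lborel. (cmod (f x))\<^sup>2) / (2*pi)"
  unfolding circ_mean_pow_def by (simp add: powr_numeral)

lemma H1_modulus:
  assumes H: "H1_with_deriv \<psi> g" and B: "K2 g \<le> B" "0 \<le> B" and xy: "x \<in> II" "y \<in> II"
    and e: "0 < e" and close: "\<bar>x - y\<bar> < e\<^sup>2 / (B + 1)"
  shows "cmod (\<psi> x - \<psi> y) < e"
proof -
  define d where "d = (B + 1) / e"
  have d: "0 < d" using B e by (simp add: d_def)
  have K: "0 \<le> K2 g" by (rule K2_nonneg[OF H1_parts(2)[OF H]])
  have main: "cmod (\<psi> u - \<psi> v) < e" if uv: "u \<in> II" "v \<in> II" "v \<le> u" "u - v < e\<^sup>2 / (B + 1)" for u v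
  proof -
    have "cmod (\<psi> u - \<psi> v) \<le> K2 g / (2*d) + d/2 * (u - v)"
      by (rule H1_diff[OF H _ uv(3) _ d]) (use uv in auto)
    also have "K2 g / (2*d) \<le> B / (2*d)" using B d by (simp add: divide_right_mono)
    also have "B / (2*d) < e/2" using B e by (simp add: d_def field_simps)
    also have "d/2 * (u - v) < e/2"
    proof -
      have "d/2 * (u - v) \<le> d/2 * (e\<^sup>2 / (B + 1))" using uv d by (intro mult_left_mono) auto
      also have "\<dots> = e/2" using B e by (simp add: d_def power2_eq_square divide_simps)
      finally have le: "d/2 * (u - v) \<le> e/2" .
      have "d/2 * (u - v) < d/2 * (e\<^sup>2 / (B + 1))" using uv d by (intro mult_strict_left_mono) auto
      then show ?thesis using \<open>d / 2 * (e\<^sup>2 / (B + 1)) = e/2\<close> by linarith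
    qed
    finally show ?thesis by simp
  qed
  show ?thesis
  proof (cases "y \<le> x")
    case True then show ?thesis using main[of x y] xy close by simp
  next
    case False then show ?thesis using main[of y x] xy close by (simp add: norm_minus_commute)
  qed
qed

lemma H1_cont:
  assumes H: "H1_with_deriv \<psi> g"
  shows "continuous_on II \<psi>"
  unfolding continuous_on_iff
proof (intro ballI allI impI)
  fix x e :: real assume x: "x \<in> II" and e: "0 < e"
  define B where "B = K2 g"
  have B: "0 \<le> B" unfolding B_def by (rule K2_nonneg[OF H1_parts(2)[OF H]])
  show "\<exists>d>0. \<forall>x'\<in>II. dist x' x < d \<longrightarrow> dist (\<psi> x') (\<psi> x) < e"
  proof (intro exI conjI ballI impI)
    show "0 < e\<^sup>2 / (B + 1)" using e B by simp
    fix y assume "y \<in> II" "dist y x < e\<^sup>2 / (B + 1)"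
    then show "dist (\<psi> y) (\<psi> x) < e"
      using H1_modulus[OF H _ B \<open>y \<in> II\<close> x e] unfolding B_def dist_norm by simp
  qed
qed

lemma periodic_int:
  assumes "\<And>x. \<psi> (x + 2*pi) = \<psi> x"
  shows "\<psi> (x + 2*pi*(of_int k)) = \<psi> x"
proof (induction k rule: int_induct[where k=0])
  case base then show ?case by simp
next
  case (step1 i)
  have "\<psi> (x + 2*pi*(of_int (i+1))) = \<psi> ((x + 2*pi*(of_int i)) + 2*pi)" by (simp add: algebra_simps)
  then show ?case using assms step1.IH by simp
next
  case (step2 i)
  have "\<psi> (x + 2*pi*(of_int i)) = \<psi> ((x + 2*pi*(of_int (i - 1))) + 2*pi)" by (simp add: algebra_simps)
  then show ?case using assms step2.IH by simp
qed

definition red :: "real \<Rightarrow> real" where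
  "red x = x + 2*pi*(of_int (- \<lfloor>(x + pi) / (2*pi)\<rfloor>))"

lemma red_II: "red x \<in> II"
proof -
  define f where "f = real_of_int \<lfloor>(x + pi) / (2*pi)\<rfloor>"
  have fl: "f \<le> (x + pi) / (2*pi)" "(x + pi) / (2*pi) < f + 1" unfolding f_def by linarith+
  have "2*pi*f \<le> 2*pi*((x + pi) / (2*pi))" using fl(1) by (intro mult_left_mono) auto
  also have "\<dots> = x + pi" by simp
  finally have y1: "-pi \<le> x - 2*pi*f" by simp
  have "x + pi = 2*pi*((x + pi) / (2*pi))" by simp
  also have "\<dots> < 2*pi*(f+1)" using fl(2) by (intro mult_strict_left_mono) auto
  finally have y2: "x - 2*pi*f \<le> pi" by (simp add: algebra_simps)
  have "red x = x - 2*pi*f" unfolding red_def f_def by simp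
  then show ?thesis using y1 y2 by simp
qed

lemma red_eq:
  assumes "\<And>x. \<phi> (x + 2*pi) = \<phi> x"
  shows "\<phi> x = \<phi> (red x)"
proof -
  have "\<phi> (x + 2*pi*(of_int (- \<lfloor>(x + pi) / (2*pi)\<rfloor>))) = \<phi> x" by (rule periodic_int[of \<phi>, OF assms])
  then show ?thesis unfolding red_def by simp
qed


lemma cont_powr:
  fixes f :: "real \<Rightarrow> real"
  assumes "continuous_on S f" "\<And>x. x \<in> S \<Longrightarrow> 0 \<le> f x" "0 < p"
  shows "continuous_on S (\<lambda>x. f x powr p)"
  unfolding continuous_on_def
proof (intro ballI)
  fix x assume x: "x \<in> S"
  have t: "(f \<longlongrightarrow> f x) (at x within S)" using assms(1) x by (simp add: continuous_on_def)
  have ev: "eventually (\<lambda>y. 0 \<le> f y) (at x within S)"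
    unfolding eventually_at_filter using assms(2) by (intro always_eventually) auto
  show "((\<lambda>x. f x powr p) \<longlongrightarrow> f x powr p) (at x within S)"
    by (rule tendsto_powr'[OF t tendsto_const]) (use ev assms(3) in auto)
qed

lemma int_const_II: "(LINT x:II|lborel. (c::real)) = 2*pi*c"
proof -
  have "measure lborel II = 2*pi" using measure_lborel_Icc[of "-pi" pi] by simp
  then show ?thesis by (subst set_integral_const) (simp_all add: emeasure_lborel_Icc)
qed

lemma H1_cont_sq:
  assumes H: "H1_with_deriv \<psi> g"
  shows "continuous_on II (\<lambda>x. (cmod (\<psi> x))\<^sup>2)"
  by (rule continuous_on_power[OF continuous_on_norm[OF H1_cont[OF H]]])

lemma H1_sup_II:
  assumes H: "H1_with_deriv \<psi> g" and c: "circ_mean_pow 2 \<psi> = 1" and B: "K2 g \<le> B" "0 \<le> B"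
    and y: "y \<in> II"
  shows "cmod (\<psi> y) \<le> 1 + (B/2 + pi)"
proof (rule ccontr)
  define C where "C = B/2 + pi"
  assume "\<not> cmod (\<psi> y) \<le> 1 + (B/2 + pi)"
  then have m1: "1 < cmod (\<psi> y) - C" unfolding C_def by simp
  define m where "m = cmod (\<psi> y) - C"
  have osc: "cmod (\<psi> y - \<psi> z) \<le> C" if z: "z \<in> II" for z
  proof (cases "z \<le> y")
    case True
    have "cmod (\<psi> y - \<psi> z) \<le> K2 g / (2*1) + 1/2 * (y - z)"
      by (rule H1_diff[OF H _ True _]) (use y z in auto)
    moreover have "K2 g / 2 \<le> B/2" "(y - z)/2 \<le> pi" using B y z by auto
    ultimately show ?thesis unfolding C_def by linarith
  next
    case False
    have "cmod (\<psi> z - \<psi> y) \<le> K2 g / (2*1) + 1/2 * (z - y)"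
      by (rule H1_diff[OF H _ _ _]) (use y z False in auto)
    moreover have "K2 g / 2 \<le> B/2" "(z - y)/2 \<le> pi" using B y z by auto
    moreover have "cmod (\<psi> y - \<psi> z) = cmod (\<psi> z - \<psi> y)" by (rule norm_minus_commute)
    ultimately show ?thesis unfolding C_def by linarith
  qed
  have lowb: "m\<^sup>2 \<le> (cmod (\<psi> z))\<^sup>2" if z: "z \<in> II" for z
  proof -
    have "cmod (\<psi> y) \<le> cmod (\<psi> z) + cmod (\<psi> y - \<psi> z)" by (rule norm_triangle_sub)
    then have "m \<le> cmod (\<psi> z)" using osc[OF z] unfolding m_def by linarith
    moreover have "0 \<le> m" using m1 unfolding m_def by simp
    ultimately show ?thesis by (rule power_mono)
  qed
  have "(LINT x:II|lborel. m\<^sup>2) \<le> (LINT x:II|lborel. (cmod (\<psi> x))\<^sup>2)"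
    by (rule set_integral_mono[OF cont_sint[OF continuous_on_const] cont_sint[OF H1_cont_sq[OF H]] lowb])
  then have "2*pi*m\<^sup>2 \<le> 2*pi" using c unfolding cmp2 int_const_II by simp
  then have "m\<^sup>2 \<le> 1" by simp
  moreover have "1 < m\<^sup>2"
  proof -
    have "1 < m" using m1 unfolding m_def .
    then have "1 * 1 < m * m" by (intro mult_strict_mono) auto
    then show ?thesis by (simp add: power2_eq_square)
  qed
  ultimately show False by simp
qed

lemma H1_sup:
  assumes H: "H1_with_deriv \<psi> g" and c: "circ_mean_pow 2 \<psi> = 1" and B: "K2 g \<le> B" "0 \<le> B"
  shows "cmod (\<psi> x) \<le> 1 + (B/2 + pi)"
proof -
  have per: "\<And>x. \<psi> (x + 2*pi) = \<psi> x" by (rule H1_parts(4)[OF H])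
  have "\<psi> x = \<psi> (red x)" by (rule red_eq[of \<psi>, OF per])
  then show ?thesis using H1_sup_II[OF H c B red_II] by simp
qed

lemma Lp_bounds:
  assumes H: "H1_with_deriv \<psi> g" and c: "circ_mean_pow 2 \<psi> = 1" and p: "0 < p" "p < 2"
  shows "0 \<le> circ_mean_pow p \<psi>" "circ_mean_pow p \<psi> \<le> 1" "0 \<le> Lp_norm_sq p \<psi>" "Lp_norm_sq p \<psi> \<le> 1"
proof -
  have cp: "continuous_on II (\<lambda>x. cmod (\<psi> x) powr p)"
    by (rule cont_powr[OF continuous_on_norm[OF H1_cont[OF H]]]) (use p in auto)
  have ip: "set_integrable lborel II (\<lambda>x. cmod (\<psi> x) powr p)" by (rule cont_sint[OF cp])
  have i2: "set_integrable lborel II (\<lambda>x. (cmod (\<psi> x))\<^sup>2)" by (rule cont_sint[OF H1_cont_sq[OF H]])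
  have i2': "set_integrable lborel II (\<lambda>x. (p/2) * (cmod (\<psi> x))\<^sup>2 + (1 - p/2))"
    by (rule set_integral_add(1)[OF set_integrable_mult_right[OF i2] cont_sint]) auto
  have "0 \<le> (LINT x:II|lborel. cmod (\<psi> x) powr p)"
    unfolding set_lebesgue_integral_def by (rule integral_nonneg_AE) (simp add: indicator_def)
  then show c0: "0 \<le> circ_mean_pow p \<psi>" unfolding circ_mean_pow_def by simp
  have "(LINT x:II|lborel. cmod (\<psi> x) powr p) \<le> (LINT x:II|lborel. (p/2) * (cmod (\<psi> x))\<^sup>2 + (1 - p/2))"
    by (rule set_integral_mono[OF ip i2']) (rule young_p, use p in auto)
  also have "\<dots> = (p/2) * (LINT x:II|lborel. (cmod (\<psi> x))\<^sup>2) + 2*pi*(1 - p/2)"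
  proof -
    have e1: "(LINT x:II|lborel. (p/2) * (cmod (\<psi> x))\<^sup>2 + (1 - p/2)) =
       (LINT x:II|lborel. (p/2) * (cmod (\<psi> x))\<^sup>2) + (LINT x:II|lborel. (1 - p/2))"
      by (rule set_integral_add(2)[OF set_integrable_mult_right[OF i2] cont_sint]) auto
    show ?thesis by (simp only: e1 set_integral_mult_right int_const_II)
  qed
  also have "(LINT x:II|lborel. (cmod (\<psi> x))\<^sup>2) = 2*pi" using c unfolding cmp2 by simp
  finally have "(LINT x:II|lborel. cmod (\<psi> x) powr p) \<le> 2*pi" by (simp add: algebra_simps)
  then show c1: "circ_mean_pow p \<psi> \<le> 1" unfolding circ_mean_pow_def by simp
  show "0 \<le> Lp_norm_sq p \<psi>" unfolding Lp_norm_sq_def by simp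
  show "Lp_norm_sq p \<psi> \<le> 1" unfolding Lp_norm_sq_def by (rule powr_le1) (use c0 c1 p in auto)
qed


lemma sq_sum: "(cmod (u + v))\<^sup>2 \<le> 2 * (cmod u)\<^sup>2 + 2 * (cmod v)\<^sup>2"
proof -
  have "cmod (u + v) \<le> cmod u + cmod v" by (rule norm_triangle_ineq)
  then have "(cmod (u + v))\<^sup>2 \<le> (cmod u + cmod v)\<^sup>2" by (intro power_mono) auto
  also have "\<dots> \<le> 2 * (cmod u)\<^sup>2 + 2 * (cmod v)\<^sup>2"
  proof -
    have "0 \<le> (cmod u - cmod v)\<^sup>2" by simp
    then show ?thesis by (simp add: power2_eq_square algebra_simps)
  qed
  finally show ?thesis .
qed

definition L2 :: "(real \<Rightarrow> complex) \<Rightarrow> bool" where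
  "L2 f \<longleftrightarrow> set_borel_measurable lborel II f \<and> set_integrable lborel II (\<lambda>x. (cmod (f x))\<^sup>2)"

lemma sbm_sq:
  fixes f :: "real \<Rightarrow> complex"
  assumes "set_borel_measurable lborel A f"
  shows "set_borel_measurable lborel A (\<lambda>x. (cmod (f x))\<^sup>2)"
proof -
  have c: "continuous_on UNIV (\<lambda>z::complex. (cmod z)\<^sup>2)"
    by (rule continuous_on_power[OF continuous_on_norm[OF continuous_on_id]])
  show ?thesis using sbm_comp[OF assms c] by simp
qed

lemma L2_add: assumes "L2 f" "L2 g" shows "L2 (\<lambda>x. f x + g x)"
proof -
  have m: "set_borel_measurable lborel II (\<lambda>x. f x + g x)"
    using assms unfolding L2_def by (intro sbm_add) auto
  have "set_integrable lborel II (\<lambda>x. (cmod (f x + g x))\<^sup>2)"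
  proof (rule sint_bound[OF sbm_sq[OF m]])
    show "set_integrable lborel II (\<lambda>x. 2 * (cmod (f x))\<^sup>2 + 2 * (cmod (g x))\<^sup>2)"
      using assms unfolding L2_def
      by (intro set_integral_add(1) set_integrable_mult_right) auto
    show "norm ((cmod (f x + g x))\<^sup>2) \<le> 2 * (cmod (f x))\<^sup>2 + 2 * (cmod (g x))\<^sup>2" for x
      using sq_sum[of "f x" "g x"] by simp
  qed
  then show ?thesis using m unfolding L2_def by simp
qed

lemma L2_cmult: assumes "L2 f" shows "L2 (\<lambda>x. c * f x)"
proof -
  have m: "set_borel_measurable lborel II (\<lambda>x. c * f x)"
    using assms unfolding L2_def by (intro sbm_cmult) auto
  have "set_integrable lborel II (\<lambda>x. (cmod c)\<^sup>2 * (cmod (f x))\<^sup>2)"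
    using assms unfolding L2_def by (intro set_integrable_mult_right) auto
  then have "set_integrable lborel II (\<lambda>x. (cmod (c * f x))\<^sup>2)"
    by (simp add: norm_mult power_mult_distrib)
  then show ?thesis using m unfolding L2_def by simp
qed

lemma L2_diff: assumes "L2 f" "L2 g" shows "L2 (\<lambda>x. f x - g x)"
  using L2_add[OF assms(1) L2_cmult[OF assms(2), of "-1"]] by simp

lemma L2_cont: "continuous_on II f \<Longrightarrow> L2 f"
  unfolding L2_def
  by (intro conjI cont_sbm cont_sint continuous_on_power continuous_on_norm) auto

lemma H1_L2: "H1_with_deriv \<psi> g \<Longrightarrow> L2 g"
  unfolding L2_def using H1_parts(2,3) by blast

lemma L2_L1: "L2 f \<Longrightarrow> set_integrable lborel II f"
  unfolding L2_def by (intro L2_imp_L1) auto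

lemma L2_H1:
  assumes "continuous_on II \<psi>" "L2 g"
  shows "L2 (\<lambda>x. g x - \<i> * complex_of_real a * \<psi> x)"
  by (rule L2_diff[OF assms(2) L2_cont[OF continuous_on_mult[OF continuous_on_const assms(1)]]])

lemma H1_add:
  assumes H1: "H1_with_deriv \<psi>1 g1" and H2: "H1_with_deriv \<psi>2 g2"
  shows "H1_with_deriv (\<lambda>x. \<psi>1 x + \<psi>2 x) (\<lambda>x. g1 x + g2 x)"
proof -
  have L: "L2 (\<lambda>x. g1 x + g2 x)" by (rule L2_add[OF H1_L2[OF H1] H1_L2[OF H2]])
  have f: "\<psi>1 x + \<psi>2 x = \<psi>1 (-pi) + \<psi>2 (-pi) + (LINT t:{-pi..x}|lborel. g1 t + g2 t)" if x: "x \<in> II" for x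
  proof -
    have s: "{-pi..x} \<subseteq> II" using x by auto
    have i1: "set_integrable lborel {-pi..x} g1" by (rule set_integrable_subset[OF H1_parts(1)[OF H1] _ s]) simp
    have i2: "set_integrable lborel {-pi..x} g2" by (rule set_integrable_subset[OF H1_parts(1)[OF H2] _ s]) simp
    have "(LINT t:{-pi..x}|lborel. g1 t + g2 t) = (LINT t:{-pi..x}|lborel. g1 t) + (LINT t:{-pi..x}|lborel. g2 t)"
      by (rule set_integral_add(2)[OF i1 i2])
    then show ?thesis using H1_parts(5)[OF H1 x] H1_parts(5)[OF H2 x] by simp
  qed
  show ?thesis unfolding H1_with_deriv_def
  proof (intro conjI allI ballI)
    fix x show "\<psi>1 (x + 2 * pi) + \<psi>2 (x + 2 * pi) = \<psi>1 x + \<psi>2 x"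
      using H1_parts(4)[OF H1, of x] H1_parts(4)[OF H2, of x] by simp
  next
    show "set_borel_measurable lborel II (\<lambda>x. g1 x + g2 x)" using L unfolding L2_def by simp
  next
    show "set_integrable lborel II (\<lambda>x. (cmod (g1 x + g2 x))\<^sup>2)" using L unfolding L2_def by simp
  next
    fix x :: real assume "x \<in> II"
    then show "\<psi>1 x + \<psi>2 x = \<psi>1 (-pi) + \<psi>2 (-pi) + (LINT t:{-pi..x}|lborel. g1 t + g2 t)" by (rule f)
  qed
qed

lemma H1_cmult:
  assumes H: "H1_with_deriv \<psi> g"
  shows "H1_with_deriv (\<lambda>x. c * \<psi> x) (\<lambda>x. c * g x)"
proof -
  have L: "L2 (\<lambda>x. c * g x)" by (rule L2_cmult[OF H1_L2[OF H]])
  show ?thesis unfolding H1_with_deriv_def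
  proof (intro conjI allI ballI)
    fix x show "c * \<psi> (x + 2 * pi) = c * \<psi> x" using H1_parts(4)[OF H, of x] by simp
  next
    show "set_borel_measurable lborel II (\<lambda>x. c * g x)" using L unfolding L2_def by simp
  next
    show "set_integrable lborel II (\<lambda>x. (cmod (c * g x))\<^sup>2)" using L unfolding L2_def by simp
  next
    fix x :: real assume x: "x \<in> II"
    show "c * \<psi> x = c * \<psi> (-pi) + (LINT t:{-pi..x}|lborel. c * g t)"
      using H1_parts(5)[OF H x] by (simp add: set_integral_mult_right distrib_left)
  qed
qed

lemma DC_II:
  fixes F :: "nat \<Rightarrow> real \<Rightarrow> 'b::{banach, second_countable_topology}"
  assumes m: "\<And>n. set_borel_measurable lborel II (F n)" "set_borel_measurable lborel II G"
    and b: "\<And>n x. x \<in> II \<Longrightarrow> norm (F n x) \<le> B"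
    and l: "\<And>x. x \<in> II \<Longrightarrow> (\<lambda>n. F n x) \<longlonglongrightarrow> G x"
  shows "(\<lambda>n. LINT x:II|lborel. F n x) \<longlonglongrightarrow> (LINT x:II|lborel. G x)"
  unfolding set_lebesgue_integral_def
proof (rule integral_dominated_convergence)
  show "(\<lambda>x. indicator II x *\<^sub>R G x) \<in> borel_measurable lborel" using m(2) by (simp add: set_borel_measurable_def)
  show "(\<lambda>x. indicator II x *\<^sub>R F n x) \<in> borel_measurable lborel" for n using m(1) by (simp add: set_borel_measurable_def)
  show "integrable lborel (\<lambda>x. indicator II x *\<^sub>R B)"
    using cont_sint[OF continuous_on_const, of B] by (simp add: set_integrable_def)
  show "AE x in lborel. (\<lambda>n. indicator II x *\<^sub>R F n x) \<longlonglongrightarrow> indicator II x *\<^sub>R G x"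
  proof (rule AE_I2)
    fix x show "(\<lambda>n. indicator II x *\<^sub>R F n x) \<longlonglongrightarrow> indicator II x *\<^sub>R G x"
    proof (cases "x \<in> II")
      case True then show ?thesis using l[OF True] by simp
    qed simp
  qed
  show "AE x in lborel. norm (indicator II x *\<^sub>R F n x) \<le> indicator II x *\<^sub>R B" for n
  proof (rule AE_I2)
    fix x show "norm (indicator II x *\<^sub>R F n x) \<le> indicator II x *\<^sub>R B"
    proof (cases "x \<in> II")
      case True then show ?thesis using b[OF True, of n] by simp
    qed simp
  qed
qed


definition kin :: "real \<Rightarrow> (real \<Rightarrow> complex) \<Rightarrow> (real \<Rightarrow> complex) \<Rightarrow> real" where
  "kin a \<psi> g = (LINT x:II|lborel. (cmod (g x - \<i> * complex_of_real a * \<psi> x))\<^sup>2)"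

lemma energy_kin: "energy a p \<mu> \<psi> g = kin a \<psi> g / (2*pi) + \<mu> * Lp_norm_sq p \<psi>"
  unfolding energy_def kin_def by simp

lemma kin_nonneg: "0 \<le> kin a \<psi> g"
  unfolding kin_def set_lebesgue_integral_def by (rule integral_nonneg_AE) (simp add: indicator_def)

lemma energy_lower:
  assumes "admissible \<psi> g" "0 < p" "p < 2"
  shows "min 0 \<mu> \<le> energy a p \<mu> \<psi> g"
proof -
  have H: "H1_with_deriv \<psi> g" and c: "circ_mean_pow 2 \<psi> = 1" using assms(1) unfolding admissible_def by auto
  have L: "0 \<le> Lp_norm_sq p \<psi>" "Lp_norm_sq p \<psi> \<le> 1" using Lp_bounds[OF H c assms(2,3)] by auto
  have "min 0 \<mu> \<le> \<mu> * Lp_norm_sq p \<psi>"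
  proof (cases "0 \<le> \<mu>")
    case True then show ?thesis using L by simp
  next
    case False
    then have "\<mu> * 1 \<le> \<mu> * Lp_norm_sq p \<psi>" using L by (intro mult_left_mono_neg) auto
    then show ?thesis by simp
  qed
  moreover have "0 \<le> kin a \<psi> g / (2*pi)" using kin_nonneg by simp
  ultimately show ?thesis unfolding energy_kin by linarith
qed

lemma admissible_const: "admissible (\<lambda>_. 1) (\<lambda>_. 0)"
proof -
  have "circ_mean_pow 2 (\<lambda>_. 1) = 1" unfolding cmp2 by (simp add: int_const_II)
  moreover have "H1_with_deriv (\<lambda>_. 1) (\<lambda>_. 0)" unfolding H1_with_deriv_def
    by (simp add: set_borel_measurable_def set_integrable_def)
  ultimately show ?thesis unfolding admissible_def by simp
qed

lemma E_bdd:
  assumes "0 < p" "p < 2"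
  shows "bdd_below {energy a p \<mu> \<psi> g | \<psi> g. admissible \<psi> g}"
  unfolding bdd_below_def using energy_lower[OF _ assms] by blast

lemma E_ne: "{energy a p \<mu> \<psi> g | \<psi> g. admissible \<psi> g} \<noteq> {}"
  using admissible_const by blast

lemma lambda_le:
  assumes "admissible \<psi> g" "0 < p" "p < 2"
  shows "lambda_ap a p \<mu> \<le> energy a p \<mu> \<psi> g"
  unfolding lambda_ap_def by (rule cInf_lower[OF _ E_bdd[OF assms(2,3)]]) (use assms(1) in blast)

lemma circ_mean_scale:
  assumes "0 < r"
  shows "circ_mean_pow q (\<lambda>x. complex_of_real r * f x) = r powr q * circ_mean_pow q f"
proof -
  have "(\<lambda>x. cmod (complex_of_real r * f x) powr q) = (\<lambda>x. r powr q * cmod (f x) powr q)"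
    using assms by (simp add: norm_mult powr_mult)
  then show ?thesis unfolding circ_mean_pow_def by (simp add: set_integral_mult_right)
qed

lemma Lp_scale:
  assumes "0 < r" "0 < p" "0 \<le> circ_mean_pow p f"
  shows "Lp_norm_sq p (\<lambda>x. complex_of_real r * f x) = r\<^sup>2 * Lp_norm_sq p f"
proof -
  have "Lp_norm_sq p (\<lambda>x. complex_of_real r * f x) = (r powr p * circ_mean_pow p f) powr (2/p)"
    unfolding Lp_norm_sq_def circ_mean_scale[OF assms(1)] ..
  also have "\<dots> = (r powr p) powr (2/p) * circ_mean_pow p f powr (2/p)"
    using assms by (simp add: powr_mult)
  also have "(r powr p) powr (2/p) = r\<^sup>2"
    using assms by (simp add: powr_powr powr_numeral)
  finally show ?thesis unfolding Lp_norm_sq_def .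
qed

lemma kin_scale:
  "kin a (\<lambda>x. complex_of_real r * w x) (\<lambda>x. complex_of_real r * G x) = r\<^sup>2 * kin a w G"
proof -
  have "(\<lambda>x. (cmod (complex_of_real r * G x - \<i> * complex_of_real a * (complex_of_real r * w x)))\<^sup>2)
      = (\<lambda>x. r\<^sup>2 * (cmod (G x - \<i> * complex_of_real a * w x))\<^sup>2)"
  proof
    fix x
    have "complex_of_real r * G x - \<i> * complex_of_real a * (complex_of_real r * w x)
        = complex_of_real r * (G x - \<i> * complex_of_real a * w x)" by (simp add: algebra_simps)
    then show "(cmod (complex_of_real r * G x - \<i> * complex_of_real a * (complex_of_real r * w x)))\<^sup>2
      = r\<^sup>2 * (cmod (G x - \<i> * complex_of_real a * w x))\<^sup>2"
      by (simp add: norm_mult power_mult_distrib)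
  qed
  then show ?thesis unfolding kin_def by (simp add: set_integral_mult_right)
qed

lemma lambda_scaled:
  assumes H: "H1_with_deriv w G" and c: "0 < circ_mean_pow 2 w" and p: "0 < p" "p < 2"
  shows "lambda_ap a p \<mu> * circ_mean_pow 2 w \<le> kin a w G / (2*pi) + \<mu> * Lp_norm_sq p w"
proof -
  define c where "c = circ_mean_pow 2 w"
  define r where "r = 1 / sqrt c"
  have c0: "0 < c" using assms unfolding c_def by simp
  have r0: "0 < r" using c0 unfolding r_def by simp
  have rc: "r\<^sup>2 * c = 1" using c0 unfolding r_def by (simp add: power_divide)
  have H': "H1_with_deriv (\<lambda>x. complex_of_real r * w x) (\<lambda>x. complex_of_real r * G x)"
    by (rule H1_cmult[OF H])
  have "circ_mean_pow 2 (\<lambda>x. complex_of_real r * w x) = r powr 2 * c"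
    unfolding c_def by (rule circ_mean_scale[OF r0])
  then have c1: "circ_mean_pow 2 (\<lambda>x. complex_of_real r * w x) = 1"
    using rc r0 by (simp add: powr_numeral)
  have adm: "admissible (\<lambda>x. complex_of_real r * w x) (\<lambda>x. complex_of_real r * G x)"
    unfolding admissible_def using H' c1 by simp
  have mp: "0 \<le> circ_mean_pow p w"
    unfolding circ_mean_pow_def set_lebesgue_integral_def
    by (intro divide_nonneg_pos integral_nonneg_AE) (auto simp: indicator_def)
  have "lambda_ap a p \<mu> \<le> energy a p \<mu> (\<lambda>x. complex_of_real r * w x) (\<lambda>x. complex_of_real r * G x)"
    by (rule lambda_le[OF adm p])
  also have "\<dots> = r\<^sup>2 * (kin a w G / (2*pi) + \<mu> * Lp_norm_sq p w)"
    unfolding energy_kin kin_scale Lp_scale[OF r0 p(1) mp] by (simp add: algebra_simps)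
  finally have "lambda_ap a p \<mu> * c \<le> r\<^sup>2 * (kin a w G / (2*pi) + \<mu> * Lp_norm_sq p w) * c"
    using c0 by (intro mult_right_mono) auto
  also have "\<dots> = (r\<^sup>2 * c) * (kin a w G / (2*pi) + \<mu> * Lp_norm_sq p w)"
    by (simp only: mult_ac)
  also have "\<dots> = kin a w G / (2*pi) + \<mu> * Lp_norm_sq p w"
    using rc by simp
  finally show ?thesis unfolding c_def .
qed


lemma fatou_sq:
  fixes F :: "nat \<Rightarrow> real \<Rightarrow> complex"
  assumes m: "\<And>n. F n \<in> borel_measurable lborel" "V \<in> borel_measurable lborel"
    and l: "AE x in lborel. (\<lambda>n. F n x) \<longlonglongrightarrow> V x"
    and i: "\<And>n. integrable lborel (\<lambda>x. (cmod (F n x))\<^sup>2)"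
    and b: "eventually (\<lambda>n. (LINT x|lborel. (cmod (F n x))\<^sup>2) \<le> C) sequentially"
  shows "integrable lborel (\<lambda>x. (cmod (V x))\<^sup>2)" "(LINT x|lborel. (cmod (V x))\<^sup>2) \<le> C"
proof -
  obtain n0 where "(LINT x|lborel. (cmod (F n0 x))\<^sup>2) \<le> C" using b eventually_sequentially by auto
  moreover have "0 \<le> (LINT x|lborel. (cmod (F n0 x))\<^sup>2)" by (rule integral_nonneg_AE) simp
  ultimately have C0: "0 \<le> C" by linarith
  have mF: "(\<lambda>x. ennreal ((cmod (F n x))\<^sup>2)) \<in> borel_measurable lborel" for n
    using m(1)[of n] by measurable
  have mV: "(\<lambda>x. (cmod (V x))\<^sup>2) \<in> borel_measurable lborel" using m(2) by measurable
  have eqF: "(\<integral>\<^sup>+x. ennreal ((cmod (F n x))\<^sup>2) \<partial>lborel) = ennreal (LINT x|lborel. (cmod (F n x))\<^sup>2)" for n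
    by (rule nn_integral_eq_integral[OF i]) simp
  have "(\<integral>\<^sup>+x. ennreal ((cmod (V x))\<^sup>2) \<partial>lborel) = (\<integral>\<^sup>+x. liminf (\<lambda>n. ennreal ((cmod (F n x))\<^sup>2)) \<partial>lborel)"
  proof (rule nn_integral_cong_AE)
    show "AE x in lborel. ennreal ((cmod (V x))\<^sup>2) = liminf (\<lambda>n. ennreal ((cmod (F n x))\<^sup>2))"
      using l
    proof (rule AE_mp, intro AE_I2 impI)
      fix x assume "(\<lambda>n. F n x) \<longlonglongrightarrow> V x"
      then have t: "(\<lambda>n. ennreal ((cmod (F n x))\<^sup>2)) \<longlonglongrightarrow> ennreal ((cmod (V x))\<^sup>2)"
        by (intro tendsto_ennrealI tendsto_power tendsto_norm)
      show "ennreal ((cmod (V x))\<^sup>2) = liminf (\<lambda>n. ennreal ((cmod (F n x))\<^sup>2))"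
        using lim_imp_Liminf[OF trivial_limit_sequentially t] by simp
    qed
  qed
  also have "\<dots> \<le> liminf (\<lambda>n. \<integral>\<^sup>+x. ennreal ((cmod (F n x))\<^sup>2) \<partial>lborel)"
    by (rule nn_integral_liminf[OF mF])
  also have "\<dots> \<le> liminf (\<lambda>n. ennreal C)"
  proof (rule Liminf_mono)
    show "\<forall>\<^sub>F n in sequentially. (\<integral>\<^sup>+x. ennreal ((cmod (F n x))\<^sup>2) \<partial>lborel) \<le> ennreal C"
      using b by eventually_elim (simp add: eqF ennreal_leI)
  qed
  also have "\<dots> = ennreal C" by (simp add: Liminf_const)
  finally have nn: "(\<integral>\<^sup>+x. ennreal ((cmod (V x))\<^sup>2) \<partial>lborel) \<le> ennreal C" .
  show iV: "integrable lborel (\<lambda>x. (cmod (V x))\<^sup>2)"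
  proof (rule integrableI_bounded[OF mV])
    have "(\<integral>\<^sup>+x. ennreal (norm ((cmod (V x))\<^sup>2)) \<partial>lborel) = (\<integral>\<^sup>+x. ennreal ((cmod (V x))\<^sup>2) \<partial>lborel)" by simp
    also have "\<dots> < \<infinity>" using nn by (simp add: le_less_trans)
    finally show "(\<integral>\<^sup>+x. ennreal (norm ((cmod (V x))\<^sup>2)) \<partial>lborel) < \<infinity>" .
  qed
  have "ennreal (LINT x|lborel. (cmod (V x))\<^sup>2) \<le> ennreal C"
    using nn nn_integral_eq_integral[OF iV] by simp
  then show "(LINT x|lborel. (cmod (V x))\<^sup>2) \<le> C" using C0 by (simp add: ennreal_le_iff)
qed

lemma ind_sq: "(cmod (indicator A x *\<^sub>R z))\<^sup>2 = indicator A x * (cmod z)\<^sup>2"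
  by (simp add: indicator_def)

lemma lint_ind_sq:
  "(LINT x|lborel. (cmod (indicator A x *\<^sub>R (f x::complex)))\<^sup>2) = (LINT x:A|lborel. (cmod (f x))\<^sup>2)"
  unfolding set_lebesgue_integral_def
  by (intro Bochner_Integration.integral_cong refl) (simp add: indicator_def)

lemma L1_by_L2:
  assumes "L2 h" "0 < d"
  shows "(LINT x:II|lborel. cmod (h x)) \<le> (1/(2*d)) * (LINT x:II|lborel. (cmod (h x))\<^sup>2) + d*pi"
proof -
  have i2: "set_integrable lborel II (\<lambda>x. (cmod (h x))\<^sup>2)" using assms(1) unfolding L2_def by simp
  have i1: "set_integrable lborel II (\<lambda>x. cmod (h x))"
    using L2_L1[OF assms(1)] by (simp add: set_integrable_norm)
  have "(LINT x:II|lborel. cmod (h x)) \<le> (LINT x:II|lborel. (1/(2*d)) * (cmod (h x))\<^sup>2 + d/2)"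
    by (rule set_integral_mono[OF i1 set_integral_add(1)[OF set_integrable_mult_right[OF i2] cont_sint]])
       (use amgm[OF assms(2)] in auto)
  also have "\<dots> = (1/(2*d)) * (LINT x:II|lborel. (cmod (h x))\<^sup>2) + d*pi"
  proof -
    have e1: "(LINT x:II|lborel. (1/(2*d)) * (cmod (h x))\<^sup>2 + d/2) =
       (LINT x:II|lborel. (1/(2*d)) * (cmod (h x))\<^sup>2) + (LINT x:II|lborel. d/2)"
      by (rule set_integral_add(2)[OF set_integrable_mult_right[OF i2] cont_sint]) auto
    show ?thesis unfolding e1 set_integral_mult_right int_const_II by simp
  qed
  finally show ?thesis .
qed

lemma L2_tri:
  assumes "L2 f" "L2 g"
  shows "(LINT x:II|lborel. (cmod (f x))\<^sup>2) \<le> 2 * (LINT x:II|lborel. (cmod (f x - g x))\<^sup>2) + 2 * (LINT x:II|lborel. (cmod (g x))\<^sup>2)"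
proof -
  have i1: "set_integrable lborel II (\<lambda>x. (cmod (f x - g x))\<^sup>2)" using L2_diff[OF assms] unfolding L2_def by simp
  have i2: "set_integrable lborel II (\<lambda>x. (cmod (g x))\<^sup>2)" using assms(2) unfolding L2_def by simp
  have i0: "set_integrable lborel II (\<lambda>x. (cmod (f x))\<^sup>2)" using assms(1) unfolding L2_def by simp
  have "(LINT x:II|lborel. (cmod (f x))\<^sup>2) \<le> (LINT x:II|lborel. 2 * (cmod (f x - g x))\<^sup>2 + 2 * (cmod (g x))\<^sup>2)"
  proof (rule set_integral_mono[OF i0 set_integral_add(1)[OF set_integrable_mult_right[OF i1] set_integrable_mult_right[OF i2]]])
    fix x show "(cmod (f x))\<^sup>2 \<le> 2 * (cmod (f x - g x))\<^sup>2 + 2 * (cmod (g x))\<^sup>2"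
      using sq_sum[of "f x - g x" "g x"] by simp
  qed
  also have "\<dots> = 2 * (LINT x:II|lborel. (cmod (f x - g x))\<^sup>2) + 2 * (LINT x:II|lborel. (cmod (g x))\<^sup>2)"
    by (simp add: set_integral_add(2)[OF set_integrable_mult_right[OF i1] set_integrable_mult_right[OF i2]] set_integral_mult_right)
  finally show ?thesis .
qed


lemma L2_complete:
  fixes U :: "nat \<Rightarrow> real \<Rightarrow> complex"
  assumes L: "\<And>j. L2 (U j)"
    and C: "\<And>e. 0 < e \<Longrightarrow> \<exists>N. \<forall>i\<ge>N. \<forall>j\<ge>N. (LINT x:II|lborel. (cmod (U i x - U j x))\<^sup>2) < e"
  obtains r V where "strict_mono r" "L2 V"
    "(\<lambda>i. LINT x:II|lborel. cmod (U (r i) x - V x)) \<longlonglongrightarrow> 0"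
    "\<And>Lm. (\<lambda>j. LINT x:II|lborel. (cmod (U j x))\<^sup>2) \<longlonglongrightarrow> Lm \<Longrightarrow> (LINT x:II|lborel. (cmod (V x))\<^sup>2) \<le> Lm"
proof -
  define f where "f j x = indicator II x *\<^sub>R U j x" for j x
  have fm: "f j \<in> borel_measurable lborel" for j
  proof -
    have "(\<lambda>x. indicator II x *\<^sub>R U j x) \<in> borel_measurable lborel"
      using L[of j] unfolding L2_def set_borel_measurable_def by simp
    then show ?thesis unfolding f_def[abs_def] .
  qed
  have fi: "integrable lborel (f j)" for j
  proof -
    have "integrable lborel (\<lambda>x. indicator II x *\<^sub>R U j x)"
      using L2_L1[OF L[of j]] unfolding set_integrable_def .
    then show ?thesis unfolding f_def[abs_def] .
  qed
  have fdiff: "f i x - f j x = indicator II x *\<^sub>R (U i x - U j x)" for i j x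
    unfolding f_def by (simp add: scaleR_diff_right)
  have fsq: "(LINT x|lborel. (cmod (f i x - f j x))\<^sup>2) = (LINT x:II|lborel. (cmod (U i x - U j x))\<^sup>2)" for i j
    unfolding fdiff by (rule lint_ind_sq)
  have fn: "(LINT x|lborel. norm (f i x - f j x)) = (LINT x:II|lborel. cmod (U i x - U j x))" for i j
    unfolding set_lebesgue_integral_def fdiff
    by (intro Bochner_Integration.integral_cong refl) (simp add: indicator_def)
  have L1C: "\<exists>N. \<forall>i\<ge>N. \<forall>j\<ge>N. (LINT x|lborel. norm (f i x - f j x)) < e" if e: "0 < e" for e
  proof -
    define d where "d = e / (4*pi)"
    have d: "0 < d" using e unfolding d_def by simp
    obtain N where N: "\<And>i j. i \<ge> N \<Longrightarrow> j \<ge> N \<Longrightarrow> (LINT x:II|lborel. (cmod (U i x - U j x))\<^sup>2) < e * d"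
      using C[of "e*d"] e d by auto
    have "(LINT x|lborel. norm (f i x - f j x)) < e" if ij: "i \<ge> N" "j \<ge> N" for i j
    proof -
      have "(LINT x|lborel. norm (f i x - f j x)) \<le> (1/(2*d)) * (LINT x:II|lborel. (cmod (U i x - U j x))\<^sup>2) + d*pi"
        unfolding fn by (rule L1_by_L2[OF L2_diff[OF L L] d])
      also have "(1/(2*d)) * (LINT x:II|lborel. (cmod (U i x - U j x))\<^sup>2) < (1/(2*d)) * (e * d)"
        using N[OF ij] d by (intro mult_strict_left_mono) auto
      also have "(1/(2*d)) * (e * d) + d * pi = e/2 + e/4" using d unfolding d_def by simp
      finally show ?thesis using e by linarith
    qed
    then show ?thesis by blast
  qed
  obtain r where r: "strict_mono r" and rC: "AE x in lborel. Cauchy (\<lambda>i. f (r i) x)"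
    using cauchy_L1_AE_cauchy_subseq[OF fi L1C] by blast
  have rge: "n \<le> r n" for n using seq_suble[OF r] .
  define V where "V x = lim (\<lambda>i. f (r i) x)" for x
  have Vm: "V \<in> borel_measurable lborel"
    unfolding V_def[abs_def] by (rule borel_measurable_lim_metric[OF fm])
  have Vl: "AE x in lborel. (\<lambda>i. f (r i) x) \<longlonglongrightarrow> V x"
    using rC
  proof (rule AE_mp, intro AE_I2 impI)
    fix x assume "Cauchy (\<lambda>i. f (r i) x)"
    then have "convergent (\<lambda>i. f (r i) x)" by (simp add: Cauchy_convergent_iff)
    then show "(\<lambda>i. f (r i) x) \<longlonglongrightarrow> V x" unfolding V_def by (simp add: convergent_LIMSEQ_iff)
  qed
  have V0: "V x = 0" if "x \<notin> II" for x
  proof -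
    have "(\<lambda>i. f (r i) x) = (\<lambda>i. 0)" using that unfolding f_def by simp
    then show ?thesis unfolding V_def by simp
  qed
  have Vind: "indicator II x *\<^sub>R V x = V x" for x using V0[of x] by (cases "x \<in> II") auto
  have fVdiff: "f i x - V x = indicator II x *\<^sub>R (U i x - V x)" for i x
    using Vind[of x] unfolding f_def by (metis scaleR_diff_right)
  have sbmV: "set_borel_measurable lborel II V"
    unfolding set_borel_measurable_def Vind using Vm .
  have fsqi: "integrable lborel (\<lambda>x. (cmod (f j x))\<^sup>2)" for j
  proof -
    have "integrable lborel (\<lambda>x. indicator II x *\<^sub>R (cmod (U j x))\<^sup>2)"
      using L[of j] unfolding L2_def set_integrable_def by simp
    moreover have "(\<lambda>x. indicator II x *\<^sub>R (cmod (U j x))\<^sup>2) = (\<lambda>x. (cmod (f j x))\<^sup>2)"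
      unfolding f_def by (rule ext) (simp add: indicator_def)
    ultimately show ?thesis by simp
  qed
  have fsq1: "(LINT x|lborel. (cmod (f j x))\<^sup>2) = (LINT x:II|lborel. (cmod (U j x))\<^sup>2)" for j
    unfolding f_def by (rule lint_ind_sq)
  have Vsq: "(LINT x|lborel. (cmod (V x))\<^sup>2) = (LINT x:II|lborel. (cmod (V x))\<^sup>2)"
    using lint_ind_sq[of II V] unfolding Vind .
  obtain N1 where N1: "\<And>i j. i \<ge> N1 \<Longrightarrow> j \<ge> N1 \<Longrightarrow> (LINT x:II|lborel. (cmod (U i x - U j x))\<^sup>2) < 1"
    using C[of 1] by auto
  define Bd where "Bd = 2 + 2 * (LINT x:II|lborel. (cmod (U N1 x))\<^sup>2)"
  have Ub: "(LINT x:II|lborel. (cmod (U j x))\<^sup>2) \<le> Bd" if "j \<ge> N1" for j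
    using L2_tri[OF L L, of j N1] N1[OF that order_refl] unfolding Bd_def by linarith
  have iV: "integrable lborel (\<lambda>x. (cmod (V x))\<^sup>2)"
  proof (rule fatou_sq(1)[OF fm Vm Vl fsqi])
    show "\<forall>\<^sub>F n in sequentially. (LINT x|lborel. (cmod (f (r n) x))\<^sup>2) \<le> Bd"
      unfolding eventually_sequentially fsq1 using Ub rge order_trans by blast
  qed
  have LV: "L2 V"
  proof -
    have "integrable lborel (\<lambda>x. indicator II x *\<^sub>R (cmod (V x))\<^sup>2)"
    proof -
      have "(\<lambda>x. indicator II x *\<^sub>R (cmod (V x))\<^sup>2) = (\<lambda>x. (cmod (V x))\<^sup>2)"
        using V0 by (intro ext) (auto simp: indicator_def)
      then show ?thesis using iV by simp
    qed
    then show ?thesis unfolding L2_def set_integrable_def using sbmV by simp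
  qed
  have L1conv: "(\<lambda>i. LINT x:II|lborel. cmod (U (r i) x - V x)) \<longlonglongrightarrow> 0"
  proof (rule LIMSEQ_I)
    fix e :: real assume e: "0 < e"
    define d where "d = e / (4*pi)"
    have d: "0 < d" using e unfolding d_def by simp
    obtain N where N: "\<And>i j. i \<ge> N \<Longrightarrow> j \<ge> N \<Longrightarrow> (LINT x:II|lborel. (cmod (U i x - U j x))\<^sup>2) < e * d / 2"
      using C[of "e*d/2"] e d by auto
    have "norm ((LINT x:II|lborel. cmod (U (r i) x - V x)) - 0) < e" if i: "i \<ge> N" for i
    proof -
      have ri: "r i \<ge> N" using rge[of i] i by simp
      have sq: "(LINT x:II|lborel. (cmod (U (r i) x - V x))\<^sup>2) \<le> e * d / 2"
      proof -
        have "(LINT x|lborel. (cmod (f (r i) x - V x))\<^sup>2) \<le> e * d / 2"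
        proof (rule fatou_sq(2)[where F="\<lambda>m x. f (r i) x - f (r m) x"])
          show "(\<lambda>x. f (r i) x - f (r m) x) \<in> borel_measurable lborel" for m
            using fm by (intro borel_measurable_diff) auto
          show "(\<lambda>x. f (r i) x - V x) \<in> borel_measurable lborel"
            using fm Vm by (intro borel_measurable_diff) auto
          show "AE x in lborel. (\<lambda>m. f (r i) x - f (r m) x) \<longlonglongrightarrow> f (r i) x - V x"
            using Vl by eventually_elim (intro tendsto_diff tendsto_const)
          show "integrable lborel (\<lambda>x. (cmod (f (r i) x - f (r m) x))\<^sup>2)" for m
          proof -
            have "integrable lborel (\<lambda>x. indicator II x *\<^sub>R (cmod (U (r i) x - U (r m) x))\<^sup>2)"
              using L2_diff[OF L L, of "r i" "r m"] unfolding L2_def set_integrable_def by simp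
            moreover have "(\<lambda>x. indicator II x *\<^sub>R (cmod (U (r i) x - U (r m) x))\<^sup>2) = (\<lambda>x. (cmod (f (r i) x - f (r m) x))\<^sup>2)"
              unfolding fdiff by (rule ext) (simp add: indicator_def)
            ultimately show ?thesis by simp
          qed
          show "\<forall>\<^sub>F m in sequentially. (LINT x|lborel. (cmod (f (r i) x - f (r m) x))\<^sup>2) \<le> e * d / 2"
            unfolding eventually_sequentially fsq
          proof (intro exI allI impI)
            fix m assume "N \<le> m"
            then have "r m \<ge> N" using rge[of m] by simp
            then show "(LINT x:II|lborel. (cmod (U (r i) x - U (r m) x))\<^sup>2) \<le> e * d / 2"
              using N[OF ri] by (simp add: less_imp_le)
          qed
        qed
        then show ?thesis unfolding fVdiff lint_ind_sq .
      qed
      have "(LINT x:II|lborel. cmod (U (r i) x - V x)) \<le> (1/(2*d)) * (LINT x:II|lborel. (cmod (U (r i) x - V x))\<^sup>2) + d*pi"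
        by (rule L1_by_L2[OF L2_diff[OF L LV] d])
      also have "(1/(2*d)) * (LINT x:II|lborel. (cmod (U (r i) x - V x))\<^sup>2) \<le> (1/(2*d)) * (e * d / 2)"
        using sq d by (intro mult_left_mono) auto
      also have "(1/(2*d)) * (e * d / 2) + d * pi = e/4 + e/4" using d unfolding d_def by simp
      finally have up: "(LINT x:II|lborel. cmod (U (r i) x - V x)) < e" using e by simp
      have "0 \<le> (LINT x:II|lborel. cmod (U (r i) x - V x))"
        unfolding set_lebesgue_integral_def by (rule integral_nonneg_AE) (simp add: indicator_def)
      then show ?thesis using up by simp
    qed
    then show "\<exists>no. \<forall>n\<ge>no. norm ((LINT x:II|lborel. cmod (U (r n) x - V x)) - 0) < e" by blast
  qed
  have Lim: "(LINT x:II|lborel. (cmod (V x))\<^sup>2) \<le> Lm"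
    if Lm: "(\<lambda>j. LINT x:II|lborel. (cmod (U j x))\<^sup>2) \<longlonglongrightarrow> Lm" for Lm
  proof (rule field_le_epsilon)
    fix e :: real assume e: "0 < e"
    have "\<forall>\<^sub>F j in sequentially. (LINT x:II|lborel. (cmod (U j x))\<^sup>2) < Lm + e"
      using order_tendstoD(2)[OF Lm] e by simp
    then obtain N where N: "\<And>j. j \<ge> N \<Longrightarrow> (LINT x:II|lborel. (cmod (U j x))\<^sup>2) < Lm + e"
      unfolding eventually_sequentially by blast
    have "(LINT x|lborel. (cmod (V x))\<^sup>2) \<le> Lm + e"
    proof (rule fatou_sq(2)[OF fm Vm Vl fsqi])
      show "\<forall>\<^sub>F n in sequentially. (LINT x|lborel. (cmod (f (r n) x))\<^sup>2) \<le> Lm + e"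
        unfolding eventually_sequentially fsq1
        using N rge order_trans less_imp_le by meson
    qed
    then show "(LINT x:II|lborel. (cmod (V x))\<^sup>2) \<le> Lm + e" unfolding Vsq .
  qed
  show ?thesis using that[OF r LV L1conv Lim] by blast
qed


lemma para: "(cmod (u - v))\<^sup>2 = 2 * (cmod u)\<^sup>2 + 2 * (cmod v)\<^sup>2 - 4 * (cmod ((u + v) / 2))\<^sup>2"
  unfolding cmod_power2 by (simp add: power2_eq_square field_simps)

lemma filterlim_ge:
  assumes "\<And>N. (I N :: nat) \<ge> N"
  shows "filterlim I sequentially sequentially"
  unfolding filterlim_at_top eventually_sequentially using assms order_trans by blast

lemma conv_means:
  fixes F :: "nat \<Rightarrow> real \<Rightarrow> complex"
  assumes c: "\<And>n. continuous_on II (F n)" "continuous_on II G"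
    and b: "\<And>n x. cmod (F n x) \<le> M"
    and l: "\<And>x. x \<in> II \<Longrightarrow> (\<lambda>n. F n x) \<longlonglongrightarrow> G x"
    and q: "0 < q"
  shows "(\<lambda>n. circ_mean_pow q (F n)) \<longlonglongrightarrow> circ_mean_pow q G"
proof -
  have "(\<lambda>n. LINT x:II|lborel. cmod (F n x) powr q) \<longlonglongrightarrow> (LINT x:II|lborel. cmod (G x) powr q)"
  proof (rule DC_II)
    show "set_borel_measurable lborel II (\<lambda>x. cmod (F n x) powr q)" for n
      by (rule cont_sbm[OF cont_powr[OF continuous_on_norm[OF c(1)]]]) (use q in auto)
    show "set_borel_measurable lborel II (\<lambda>x. cmod (G x) powr q)"
      by (rule cont_sbm[OF cont_powr[OF continuous_on_norm[OF c(2)]]]) (use q in auto)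
    show "norm (cmod (F n x) powr q) \<le> M powr q" for n x
      using powr_mono2[of q "cmod (F n x)" M] b[of n x] q by simp
    show "(\<lambda>n. cmod (F n x) powr q) \<longlonglongrightarrow> cmod (G x) powr q" if "x \<in> II" for x
      by (rule tendsto_powr'[OF tendsto_norm[OF l[OF that]] tendsto_const]) (use q in auto)
  qed
  then show ?thesis unfolding circ_mean_pow_def by (intro tendsto_divide tendsto_const) auto
qed

lemma conv_Lp:
  fixes F :: "nat \<Rightarrow> real \<Rightarrow> complex"
  assumes c: "\<And>n. continuous_on II (F n)" "continuous_on II G"
    and b: "\<And>n x. cmod (F n x) \<le> M"
    and l: "\<And>x. x \<in> II \<Longrightarrow> (\<lambda>n. F n x) \<longlonglongrightarrow> G x"
    and q: "0 < q"
  shows "(\<lambda>n. Lp_norm_sq q (F n)) \<longlonglongrightarrow> Lp_norm_sq q G"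
proof -
  have m: "(\<lambda>n. circ_mean_pow q (F n)) \<longlonglongrightarrow> circ_mean_pow q G" by (rule conv_means[OF c b l q])
  have nn: "0 \<le> circ_mean_pow q (F n)" for n
    unfolding circ_mean_pow_def set_lebesgue_integral_def
    by (intro divide_nonneg_pos integral_nonneg_AE) (auto simp: indicator_def)
  show ?thesis unfolding Lp_norm_sq_def
    by (rule tendsto_powr'[OF m tendsto_const]) (use q nn in auto)
qed


lemma cauchy_step:
  fixes P Q :: "nat \<Rightarrow> real \<Rightarrow> complex"
  assumes H: "\<And>j. H1_with_deriv (P j) (Q j)"
    and M: "\<And>j x. cmod (P j x) \<le> M"
    and conv: "\<And>x. (\<lambda>j. P j x) \<longlonglongrightarrow> \<psi> x"
    and \<psi>c: "continuous_on II \<psi>"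
    and c\<psi>: "circ_mean_pow 2 \<psi> = 1"
    and kinL: "(\<lambda>j. kin a (P j) (Q j)) \<longlonglongrightarrow> 2*pi*(lambda_ap a p \<mu> - \<mu> * Lp_norm_sq p \<psi>)"
    and p: "0 < p" "p < 2"
    and e: "0 < e"
  shows "\<exists>N. \<forall>i\<ge>N. \<forall>j\<ge>N. (LINT x:II|lborel. (cmod ((Q i x - \<i> * complex_of_real a * P i x) - (Q j x - \<i> * complex_of_real a * P j x)))\<^sup>2) < e"
proof (rule ccontr)
  define U where "U j x = Q j x - \<i> * complex_of_real a * P j x" for j x
  define D where "D i j = (LINT x:II|lborel. (cmod (U i x - U j x))\<^sup>2)" for i j
  define lam where "lam = lambda_ap a p \<mu>"
  define Lk where "Lk = 2*pi*(lam - \<mu> * Lp_norm_sq p \<psi>)"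
  assume "\<not> ?thesis"
  then have "\<forall>N. \<exists>ij. fst ij \<ge> N \<and> snd ij \<ge> N \<and> D (fst ij) (snd ij) \<ge> e"
    unfolding D_def U_def by (auto simp: not_less)
  then obtain IJ where IJ: "\<And>N. fst (IJ N) \<ge> N \<and> snd (IJ N) \<ge> N \<and> D (fst (IJ N)) (snd (IJ N)) \<ge> e"
    by metis
  define I where "I N = fst (IJ N)" for N
  define J where "J N = snd (IJ N)" for N
  have IJ': "I N \<ge> N" "J N \<ge> N" "D (I N) (J N) \<ge> e" for N using IJ[of N] unfolding I_def J_def by auto
  have fI: "filterlim I sequentially sequentially" by (rule filterlim_ge) (use IJ' in auto)
  have fJ: "filterlim J sequentially sequentially" by (rule filterlim_ge) (use IJ' in auto)
  have Pc: "continuous_on II (P j)" for j by (rule H1_cont[OF H])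
  have LU: "L2 (U j)" for j unfolding U_def[abs_def] by (rule L2_H1[OF Pc H1_L2[OF H]])
  have kinU: "kin a (P j) (Q j) = (LINT x:II|lborel. (cmod (U j x))\<^sup>2)" for j
    unfolding kin_def U_def ..
  define w where "w N x = (1/2) * (P (I N) x + P (J N) x)" for N x
  define W where "W N x = (1/2) * (Q (I N) x + Q (J N) x)" for N x
  have Hw: "H1_with_deriv (w N) (W N)" for N
    unfolding w_def[abs_def] W_def[abs_def] by (rule H1_cmult[OF H1_add[OF H H]])
  have wc: "continuous_on II (w N)" for N by (rule H1_cont[OF Hw])
  have wM: "cmod (w N x) \<le> M" for N x
  proof -
    have "cmod (w N x) \<le> (1/2) * (cmod (P (I N) x) + cmod (P (J N) x))"
      unfolding w_def by (simp add: norm_mult norm_triangle_ineq divide_right_mono)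
    also have "\<dots> \<le> (1/2) * (M + M)" using M by (intro mult_left_mono add_mono) auto
    finally show ?thesis by simp
  qed
  have wl: "(\<lambda>N. w N x) \<longlonglongrightarrow> \<psi> x" for x
  proof -
    have "(\<lambda>N. P (I N) x) \<longlonglongrightarrow> \<psi> x" using filterlim_compose[OF conv fI] by (simp add: o_def)
    moreover have "(\<lambda>N. P (J N) x) \<longlonglongrightarrow> \<psi> x" using filterlim_compose[OF conv fJ] by (simp add: o_def)
    ultimately have "(\<lambda>N. (1/2) * (P (I N) x + P (J N) x)) \<longlonglongrightarrow> (1/2) * (\<psi> x + \<psi> x)"
      by (intro tendsto_mult tendsto_add tendsto_const)
    then show ?thesis unfolding w_def by simp
  qed
  have cw: "(\<lambda>N. circ_mean_pow 2 (w N)) \<longlonglongrightarrow> 1"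
    using conv_means[OF wc \<psi>c wM wl, of 2] c\<psi> by simp
  have Lpw: "(\<lambda>N. Lp_norm_sq p (w N)) \<longlonglongrightarrow> Lp_norm_sq p \<psi>"
    by (rule conv_Lp[OF wc \<psi>c wM wl p(1)])
  have kI: "(\<lambda>N. kin a (P (I N)) (Q (I N))) \<longlonglongrightarrow> Lk"
    using filterlim_compose[OF kinL fI] unfolding Lk_def lam_def by (simp add: o_def)
  have kJ: "(\<lambda>N. kin a (P (J N)) (Q (J N))) \<longlonglongrightarrow> Lk"
    using filterlim_compose[OF kinL fJ] unfolding Lk_def lam_def by (simp add: o_def)
  define R where "R N = 2 * kin a (P (I N)) (Q (I N)) + 2 * kin a (P (J N)) (Q (J N))
      - 8 * pi * (lam * circ_mean_pow 2 (w N) - \<mu> * Lp_norm_sq p (w N))" for N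
  have RL: "R \<longlonglongrightarrow> 2 * Lk + 2 * Lk - 8 * pi * (lam * 1 - \<mu> * Lp_norm_sq p \<psi>)"
    unfolding R_def[abs_def] by (intro tendsto_intros kI kJ cw Lpw)
  have "2 * Lk + 2 * Lk - 8 * pi * (lam * 1 - \<mu> * Lp_norm_sq p \<psi>) = 0" unfolding Lk_def by simp
  then have R0: "R \<longlonglongrightarrow> 0" using RL by simp
  have evR: "eventually (\<lambda>N. R N < e) sequentially" using order_tendstoD(2)[OF R0 e] .
  have evc: "eventually (\<lambda>N. 0 < circ_mean_pow 2 (w N)) sequentially"
    using order_tendstoD(1)[OF cw] by simp
  have DR: "D (I N) (J N) \<le> R N" if cpos: "0 < circ_mean_pow 2 (w N)" for N
  proof -
    have lw: "lam * circ_mean_pow 2 (w N) \<le> kin a (w N) (W N) / (2*pi) + \<mu> * Lp_norm_sq p (w N)"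
      unfolding lam_def by (rule lambda_scaled[OF Hw cpos p])
    have kw: "kin a (w N) (W N) = (LINT x:II|lborel. (cmod ((U (I N) x + U (J N) x) / 2))\<^sup>2)"
    proof -
      have "(\<lambda>x. (cmod (W N x - \<i> * complex_of_real a * w N x))\<^sup>2) = (\<lambda>x. (cmod ((U (I N) x + U (J N) x) / 2))\<^sup>2)"
      proof (rule ext)
        fix x
        have "W N x - \<i> * complex_of_real a * w N x = (U (I N) x + U (J N) x) / 2"
          unfolding W_def w_def U_def by (simp add: field_simps)
        then show "(cmod (W N x - \<i> * complex_of_real a * w N x))\<^sup>2 = (cmod ((U (I N) x + U (J N) x) / 2))\<^sup>2"
          by (simp only:)
      qed
      then show ?thesis unfolding kin_def by simp
    qed
    have i1: "set_integrable lborel II (\<lambda>x. (cmod (U i x))\<^sup>2)" for i using LU[of i] unfolding L2_def by simp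
    have i3: "set_integrable lborel II (\<lambda>x. (cmod ((U (I N) x + U (J N) x) / 2))\<^sup>2)"
    proof -
      have e: "(\<lambda>x. (1/2) * (U (I N) x + U (J N) x)) = (\<lambda>x. (U (I N) x + U (J N) x) / 2)"
        by (rule ext) simp
      have "L2 (\<lambda>x. (U (I N) x + U (J N) x) / 2)"
        using L2_cmult[OF L2_add[OF LU LU], of "1/2" "I N" "J N"] unfolding e .
      then show ?thesis unfolding L2_def by blast
    qed
    have "D (I N) (J N) = (LINT x:II|lborel. 2 * (cmod (U (I N) x))\<^sup>2 + 2 * (cmod (U (J N) x))\<^sup>2 - 4 * (cmod ((U (I N) x + U (J N) x) / 2))\<^sup>2)"
      unfolding D_def para ..
    also have "\<dots> = 2 * (LINT x:II|lborel. (cmod (U (I N) x))\<^sup>2) + 2 * (LINT x:II|lborel. (cmod (U (J N) x))\<^sup>2)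
        - 4 * (LINT x:II|lborel. (cmod ((U (I N) x + U (J N) x) / 2))\<^sup>2)"
    proof -
      have iA: "set_integrable lborel II (\<lambda>x. 2 * (cmod (U (I N) x))\<^sup>2)" by (rule set_integrable_mult_right[OF i1])
      have iB: "set_integrable lborel II (\<lambda>x. 2 * (cmod (U (J N) x))\<^sup>2)" by (rule set_integrable_mult_right[OF i1])
      have iC: "set_integrable lborel II (\<lambda>x. 4 * (cmod ((U (I N) x + U (J N) x) / 2))\<^sup>2)"
        by (rule set_integrable_mult_right[OF i3])
      have e1: "(LINT x:II|lborel. 2 * (cmod (U (I N) x))\<^sup>2 + 2 * (cmod (U (J N) x))\<^sup>2 - 4 * (cmod ((U (I N) x + U (J N) x) / 2))\<^sup>2)
         = (LINT x:II|lborel. 2 * (cmod (U (I N) x))\<^sup>2 + 2 * (cmod (U (J N) x))\<^sup>2) - (LINT x:II|lborel. 4 * (cmod ((U (I N) x + U (J N) x) / 2))\<^sup>2)"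
        by (rule set_integral_diff(2)[OF set_integral_add(1)[OF iA iB] iC])
      have e2: "(LINT x:II|lborel. 2 * (cmod (U (I N) x))\<^sup>2 + 2 * (cmod (U (J N) x))\<^sup>2)
         = (LINT x:II|lborel. 2 * (cmod (U (I N) x))\<^sup>2) + (LINT x:II|lborel. 2 * (cmod (U (J N) x))\<^sup>2)"
        by (rule set_integral_add(2)[OF iA iB])
      show ?thesis by (simp only: e1 e2 set_integral_mult_right)
    qed
    also have "\<dots> = 2 * kin a (P (I N)) (Q (I N)) + 2 * kin a (P (J N)) (Q (J N)) - 4 * kin a (w N) (W N)"
      unfolding kinU kw ..
    also have "\<dots> \<le> R N"
    proof -
      have "8 * pi * (lam * circ_mean_pow 2 (w N) - \<mu> * Lp_norm_sq p (w N)) \<le> 4 * kin a (w N) (W N)"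
      proof -
        have "lam * circ_mean_pow 2 (w N) - \<mu> * Lp_norm_sq p (w N) \<le> kin a (w N) (W N) / (2*pi)"
          using lw by simp
        then have "(8*pi) * (lam * circ_mean_pow 2 (w N) - \<mu> * Lp_norm_sq p (w N)) \<le> (8*pi) * (kin a (w N) (W N) / (2*pi))"
          by (intro mult_left_mono) auto
        then show ?thesis by simp
      qed
      then show ?thesis unfolding R_def by simp
    qed
    finally show ?thesis .
  qed
  have "eventually (\<lambda>N. False) sequentially"
    using evR evc
  proof eventually_elim
    case (elim N)
    then show False using DR[of N] IJ'(3)[of N] by simp
  qed
  then show False by simp
qed


lemma sub_conv:
  fixes F :: "nat \<Rightarrow> real \<Rightarrow> complex"
  assumes i: "\<And>n. set_integrable lborel II (F n)" "set_integrable lborel II Fl"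
    and l: "(\<lambda>n. LINT t:II|lborel. cmod (F n t - Fl t)) \<longlonglongrightarrow> 0"
    and x: "x \<in> II"
  shows "(\<lambda>n. LINT t:{-pi..x}|lborel. F n t) \<longlonglongrightarrow> (LINT t:{-pi..x}|lborel. Fl t)"
proof -
  have s: "{-pi..x} \<subseteq> II" using x by auto
  have id: "set_integrable lborel II (\<lambda>t. F n t - Fl t)" for n by (rule set_integral_diff(1)[OF i(1) i(2)])
  have isub: "set_integrable lborel {-pi..x} (\<lambda>t. F n t - Fl t)" for n
    by (rule set_integrable_subset[OF id _ s]) simp
  have "(\<lambda>n. (LINT t:{-pi..x}|lborel. F n t - Fl t)) \<longlonglongrightarrow> 0"
  proof (rule Lim_null_comparison[OF _ l])
    show "\<forall>\<^sub>F n in sequentially. norm (LINT t:{-pi..x}|lborel. F n t - Fl t) \<le> (LINT t:II|lborel. cmod (F n t - Fl t))"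
    proof (rule always_eventually, rule allI)
      fix n
      have "norm (LINT t:{-pi..x}|lborel. F n t - Fl t) \<le> (LINT t:{-pi..x}|lborel. norm (F n t - Fl t))"
        by (rule set_integral_norm_bound[OF isub])
      also have "\<dots> \<le> (LINT t:II|lborel. cmod (F n t - Fl t))"
        by (rule sint_mono_set) (use id s in \<open>auto simp: set_integrable_norm\<close>)
      finally show "norm (LINT t:{-pi..x}|lborel. F n t - Fl t) \<le> (LINT t:II|lborel. cmod (F n t - Fl t))" .
    qed
  qed
  moreover have "(LINT t:{-pi..x}|lborel. F n t - Fl t) = (LINT t:{-pi..x}|lborel. F n t) - (LINT t:{-pi..x}|lborel. Fl t)" for n
    by (rule set_integral_diff(2)[OF set_integrable_subset[OF i(1) _ s] set_integrable_subset[OF i(2) _ s]]) simp_all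
  ultimately have "(\<lambda>n. (LINT t:{-pi..x}|lborel. F n t) - (LINT t:{-pi..x}|lborel. Fl t)) \<longlonglongrightarrow> 0" by simp
  then show ?thesis by (simp add: LIM_zero_iff)
qed


theorem lemma3p2:
  fixes a p \<mu> :: real
  assumes "0 \<le> a" "a \<le> 1/2" "1 \<le> p" "p < 2" "\<mu> \<ge> - (a\<^sup>2)"
  shows "\<exists>\<psi> g. admissible \<psi> g \<and> energy a p \<mu> \<psi> g = lambda_ap a p \<mu>"
proof -
  have p: "0 < p" "p < 2" using assms by auto
  define lam where "lam = lambda_ap a p \<mu>"
  define E where "E = {energy a p \<mu> \<psi> g | \<psi> g. admissible \<psi> g}"
  have lamE: "lam = Inf E" unfolding lam_def lambda_ap_def E_def ..
  have Ene: "E \<noteq> {}" unfolding E_def by (rule E_ne)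
  have ex: "\<exists>z. admissible (fst z) (snd z) \<and> energy a p \<mu> (fst z) (snd z) < lam + 1 / real (Suc n)" for n
  proof -
    have "Inf E < lam + 1 / real (Suc n)" using lamE by simp
    then obtain y where "y \<in> E" "y < lam + 1 / real (Suc n)" using cInf_lessD[OF Ene] by blast
    then obtain \<psi> g where "admissible \<psi> g" "energy a p \<mu> \<psi> g < lam + 1 / real (Suc n)"
      unfolding E_def by blast
    then show ?thesis by (intro exI[of _ "(\<psi>, g)"]) simp
  qed
  then have exall: "\<forall>n. \<exists>z. admissible (fst z) (snd z) \<and> energy a p \<mu> (fst z) (snd z) < lam + 1 / real (Suc n)" by blast
  obtain Z where Z: "\<And>n. admissible (fst (Z n)) (snd (Z n)) \<and> energy a p \<mu> (fst (Z n)) (snd (Z n)) < lam + 1 / real (Suc n)"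
    using choice[OF exall] by blast
  define \<Psi> where "\<Psi> n = fst (Z n)" for n
  define G where "G n = snd (Z n)" for n
  have adm: "admissible (\<Psi> n) (G n)" for n using Z[of n] unfolding \<Psi>_def G_def by simp
  have en: "energy a p \<mu> (\<Psi> n) (G n) < lam + 1 / real (Suc n)" for n using Z[of n] unfolding \<Psi>_def G_def by simp
  have H: "H1_with_deriv (\<Psi> n) (G n)" for n using adm[of n] unfolding admissible_def by simp
  have c1: "circ_mean_pow 2 (\<Psi> n) = 1" for n using adm[of n] unfolding admissible_def by simp
  have enlow: "lam \<le> energy a p \<mu> (\<Psi> n) (G n)" for n unfolding lam_def by (rule lambda_le[OF adm p])
  have enconv: "(\<lambda>n. energy a p \<mu> (\<Psi> n) (G n)) \<longlonglongrightarrow> lam"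
  proof (rule tendsto_sandwich[of "\<lambda>n. lam" _ _ "\<lambda>n. lam + 1 / real (Suc n)"])
    show "\<forall>\<^sub>F n in sequentially. lam \<le> energy a p \<mu> (\<Psi> n) (G n)" using enlow by simp
    show "\<forall>\<^sub>F n in sequentially. energy a p \<mu> (\<Psi> n) (G n) \<le> lam + 1 / real (Suc n)"
      by (intro always_eventually allI less_imp_le en)
    show "(\<lambda>n. lam) \<longlonglongrightarrow> lam" by simp
    have h: "(\<lambda>n. 1 / real (Suc n)) \<longlonglongrightarrow> 0" using LIMSEQ_Suc[OF lim_1_over_n] by simp
    show "(\<lambda>n. lam + 1 / real (Suc n)) \<longlonglongrightarrow> lam" using tendsto_add[OF tendsto_const[of lam] h] by simp
  qed
  have Lpb: "0 \<le> Lp_norm_sq p (\<Psi> n)" "Lp_norm_sq p (\<Psi> n) \<le> 1" for n using Lp_bounds[OF H c1 p] by auto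
  define Kb where "Kb = 2*pi*(lam + 1 + \<bar>\<mu>\<bar>)"
  have kinb: "kin a (\<Psi> n) (G n) \<le> Kb" for n
  proof -
    have "\<bar>\<mu> * Lp_norm_sq p (\<Psi> n)\<bar> \<le> \<bar>\<mu>\<bar> * 1"
      unfolding abs_mult using Lpb[of n] by (intro mult_left_mono) auto
    moreover have "1 / real (Suc n) \<le> 1" by simp
    ultimately have "kin a (\<Psi> n) (G n) / (2*pi) \<le> lam + 1 + \<bar>\<mu>\<bar>"
      using en[of n] unfolding energy_kin by linarith
    then show ?thesis unfolding Kb_def by (simp add: field_simps)
  qed
  define B where "B = 2*Kb + 4*pi*a\<^sup>2"
  have Pc: "continuous_on II (\<Psi> n)" for n by (rule H1_cont[OF H])
  have K2b: "K2 (G n) \<le> B" for n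
  proof -
    have Lc: "L2 (\<lambda>x. \<i> * complex_of_real a * \<Psi> n x)"
      by (rule L2_cont[OF continuous_on_mult[OF continuous_on_const Pc]])
    have "K2 (G n) \<le> 2 * (LINT x:II|lborel. (cmod (G n x - \<i> * complex_of_real a * \<Psi> n x))\<^sup>2)
        + 2 * (LINT x:II|lborel. (cmod (\<i> * complex_of_real a * \<Psi> n x))\<^sup>2)"
      unfolding K2_def by (rule L2_tri[OF H1_L2[OF H] Lc])
    also have "(LINT x:II|lborel. (cmod (G n x - \<i> * complex_of_real a * \<Psi> n x))\<^sup>2) = kin a (\<Psi> n) (G n)"
      unfolding kin_def ..
    also have "(LINT x:II|lborel. (cmod (\<i> * complex_of_real a * \<Psi> n x))\<^sup>2) = a\<^sup>2 * (2*pi)"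
    proof -
      have "(LINT x:II|lborel. (cmod (\<i> * complex_of_real a * \<Psi> n x))\<^sup>2) = (LINT x:II|lborel. a\<^sup>2 * (cmod (\<Psi> n x))\<^sup>2)"
        by (simp add: norm_mult power_mult_distrib)
      also have "\<dots> = a\<^sup>2 * (LINT x:II|lborel. (cmod (\<Psi> n x))\<^sup>2)" by (rule set_integral_mult_right)
      also have "(LINT x:II|lborel. (cmod (\<Psi> n x))\<^sup>2) = 2*pi" using c1[of n] unfolding cmp2 by simp
      finally show ?thesis .
    qed
    finally have "K2 (G n) \<le> 2 * kin a (\<Psi> n) (G n) + 2 * (a\<^sup>2 * (2 * pi))" .
    moreover have "2 * (a\<^sup>2 * (2 * pi)) = 4*pi*a\<^sup>2" by simp
    ultimately show ?thesis using kinb[of n] unfolding B_def by linarith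
  qed
  have B0: "0 \<le> B" using K2b[of 0] K2_nonneg[OF H1_parts(2)[OF H[of 0]]] by simp
  define Mb where "Mb = 1 + (B/2 + pi)"
  have PM: "cmod (\<Psi> n x) \<le> Mb" for n x unfolding Mb_def by (rule H1_sup[OF H c1 K2b B0])
  have equi: "\<exists>d>0. \<forall>n y. y \<in> II \<and> norm (x - y) < d \<longrightarrow> norm (\<Psi> n x - \<Psi> n y) < e"
    if x: "x \<in> II" and e: "0 < e" for x e
  proof (intro exI conjI allI impI)
    show "0 < e\<^sup>2 / (B + 1)" using e B0 by simp
    fix n y assume "y \<in> II \<and> norm (x - y) < e\<^sup>2 / (B + 1)"
    then show "norm (\<Psi> n x - \<Psi> n y) < e"
      using H1_modulus[OF H K2b B0 x _ e, of y] by simp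
  qed
  obtain \<Phi> k where \<Phi>c: "continuous_on II \<Phi>" and k: "strict_mono (k :: nat \<Rightarrow> nat)"
    and unif: "\<And>e. 0 < e \<Longrightarrow> \<exists>N. \<forall>n x. n \<ge> N \<and> x \<in> II \<longrightarrow> norm (\<Psi> (k n) x - \<Phi> x) < e"
    using Arzela_Ascoli[OF compact_Icc[of "-pi" pi], of \<Psi> Mb] PM equi by blast
  define P where "P j = \<Psi> (k j)" for j
  define Q where "Q j = G (k j)" for j
  have HP: "H1_with_deriv (P j) (Q j)" for j unfolding P_def Q_def by (rule H)
  have PcP: "continuous_on II (P j)" for j unfolding P_def by (rule Pc)
  have PMP: "cmod (P j x) \<le> Mb" for j x unfolding P_def by (rule PM)
  have convII: "(\<lambda>j. P j x) \<longlonglongrightarrow> \<Phi> x" if x: "x \<in> II" for x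
  proof (rule LIMSEQ_I)
    fix e :: real assume "0 < e"
    then obtain N where "\<forall>n x. n \<ge> N \<and> x \<in> II \<longrightarrow> norm (\<Psi> (k n) x - \<Phi> x) < e" using unif by blast
    then show "\<exists>no. \<forall>n\<ge>no. norm (P n x - \<Phi> x) < e" unfolding P_def using x by blast
  qed
  define \<psi> where "\<psi> x = \<Phi> (red x)" for x
  have perP: "P j (x + 2*pi) = P j x" for j x using H1_parts(4)[OF HP] by simp
  have conv: "(\<lambda>j. P j x) \<longlonglongrightarrow> \<psi> x" for x
  proof -
    have "P j x = P j (red x)" for j by (rule red_eq[of "P j", OF perP])
    then show ?thesis unfolding \<psi>_def using convII[OF red_II] by simp
  qed
  have \<psi>II: "\<psi> x = \<Phi> x" if "x \<in> II" for x by (rule LIMSEQ_unique[OF conv convII[OF that]])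
  have \<psi>c: "continuous_on II \<psi>"
  proof -
    have "continuous_on II \<psi> = continuous_on II \<Phi>" by (rule continuous_on_cong[OF refl \<psi>II])
    then show ?thesis using \<Phi>c by simp
  qed
  have \<psi>per: "\<psi> (x + 2*pi) = \<psi> x" for x
    using conv[of "x + 2*pi"] conv[of x] unfolding perP by (rule LIMSEQ_unique)
  have convII': "(\<lambda>j. P j x) \<longlonglongrightarrow> \<psi> x" if "x \<in> II" for x by (rule conv)
  have c\<psi>: "circ_mean_pow 2 \<psi> = 1"
  proof -
    have "(\<lambda>j. circ_mean_pow 2 (P j)) \<longlonglongrightarrow> circ_mean_pow 2 \<psi>"
      using conv_means[OF PcP \<psi>c PMP convII', of 2] by simp
    moreover have "circ_mean_pow 2 (P j) = 1" for j unfolding P_def by (rule c1)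
    ultimately show ?thesis using LIMSEQ_unique[OF _ tendsto_const] by simp
  qed
  have LpP: "(\<lambda>j. Lp_norm_sq p (P j)) \<longlonglongrightarrow> Lp_norm_sq p \<psi>"
    by (rule conv_Lp[OF PcP \<psi>c PMP convII' p(1)])
  have enP: "(\<lambda>j. energy a p \<mu> (P j) (Q j)) \<longlonglongrightarrow> lam"
    using LIMSEQ_subseq_LIMSEQ[OF enconv k] unfolding P_def Q_def by (simp add: o_def)
  have kinE: "kin a (P j) (Q j) = 2*pi*(energy a p \<mu> (P j) (Q j) - \<mu> * Lp_norm_sq p (P j))" for j
    unfolding energy_kin by simp
  have kinP: "(\<lambda>j. kin a (P j) (Q j)) \<longlonglongrightarrow> 2*pi*(lambda_ap a p \<mu> - \<mu> * Lp_norm_sq p \<psi>)"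
    unfolding kinE lam_def[symmetric] by (intro tendsto_intros enP LpP)
  define U where "U j x = Q j x - \<i> * complex_of_real a * P j x" for j x
  have CC: "\<exists>N. \<forall>i\<ge>N. \<forall>j\<ge>N. (LINT x:II|lborel. (cmod (U i x - U j x))\<^sup>2) < e" if "0 < e" for e
    unfolding U_def by (rule cauchy_step[OF HP PMP conv \<psi>c c\<psi> kinP p that])
  have LU: "L2 (U j)" for j unfolding U_def[abs_def] by (rule L2_H1[OF PcP H1_L2[OF HP]])
  obtain r V where r: "strict_mono r" and LV: "L2 V"
    and L1c: "(\<lambda>i. LINT x:II|lborel. cmod (U (r i) x - V x)) \<longlonglongrightarrow> 0"
    and Vb: "\<And>Lm. (\<lambda>j. LINT x:II|lborel. (cmod (U j x))\<^sup>2) \<longlonglongrightarrow> Lm \<Longrightarrow> (LINT x:II|lborel. (cmod (V x))\<^sup>2) \<le> Lm"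
    using L2_complete[OF LU CC] by blast
  define g where "g x = V x + \<i> * complex_of_real a * \<psi> x" for x
  have Lpsi: "L2 (\<lambda>x. \<i> * complex_of_real a * \<psi> x)"
    by (rule L2_cont[OF continuous_on_mult[OF continuous_on_const \<psi>c]])
  have Lg: "L2 g" unfolding g_def[abs_def] by (rule L2_add[OF LV Lpsi])
  have formula: "\<psi> x = \<psi> (-pi) + (LINT t:{-pi..x}|lborel. g t)" if x: "x \<in> II" for x
  proof -
    have s: "{-pi..x} \<subseteq> II" using x by auto
    have mpi: "-pi \<in> II" by simp
    have iU: "set_integrable lborel {-pi..x} (U j)" for j by (rule set_integrable_subset[OF L2_L1[OF LU] _ s]) simp
    have iP: "set_integrable lborel {-pi..x} (\<lambda>t. \<i> * complex_of_real a * P j t)" for j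
      by (rule set_integrable_subset[OF cont_sint[OF continuous_on_mult[OF continuous_on_const PcP]] _ s]) simp
    have iV: "set_integrable lborel {-pi..x} V" by (rule set_integrable_subset[OF L2_L1[OF LV] _ s]) simp
    have iPs: "set_integrable lborel {-pi..x} (\<lambda>t. \<i> * complex_of_real a * \<psi> t)"
      by (rule set_integrable_subset[OF cont_sint[OF continuous_on_mult[OF continuous_on_const \<psi>c]] _ s]) simp
    have eqj: "P j x = P j (-pi) + ((LINT t:{-pi..x}|lborel. U j t) + (LINT t:{-pi..x}|lborel. \<i> * complex_of_real a * P j t))" for j
    proof -
      have "(LINT t:{-pi..x}|lborel. Q j t) = (LINT t:{-pi..x}|lborel. U j t + \<i> * complex_of_real a * P j t)"
        unfolding U_def by simp
      also have "\<dots> = (LINT t:{-pi..x}|lborel. U j t) + (LINT t:{-pi..x}|lborel. \<i> * complex_of_real a * P j t)"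
        by (rule set_integral_add(2)[OF iU iP])
      finally show ?thesis using H1_parts(5)[OF HP x] by simp
    qed
    have l1: "(\<lambda>i. P (r i) x) \<longlonglongrightarrow> \<psi> x" using LIMSEQ_subseq_LIMSEQ[OF conv r] by (simp add: o_def)
    have l2: "(\<lambda>i. P (r i) (-pi)) \<longlonglongrightarrow> \<psi> (-pi)" using LIMSEQ_subseq_LIMSEQ[OF conv r] by (simp add: o_def)
    have l3: "(\<lambda>i. LINT t:{-pi..x}|lborel. U (r i) t) \<longlonglongrightarrow> (LINT t:{-pi..x}|lborel. V t)"
      by (rule sub_conv[OF L2_L1[OF LU] L2_L1[OF LV] L1c x])
    have l4: "(\<lambda>i. LINT t:{-pi..x}|lborel. \<i> * complex_of_real a * P (r i) t) \<longlonglongrightarrow> (LINT t:{-pi..x}|lborel. \<i> * complex_of_real a * \<psi> t)"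
    proof (rule sub_conv[OF _ _ _ x])
      show "set_integrable lborel II (\<lambda>t. \<i> * complex_of_real a * P (r n) t)" for n
        by (rule cont_sint[OF continuous_on_mult[OF continuous_on_const PcP]])
      show "set_integrable lborel II (\<lambda>t. \<i> * complex_of_real a * \<psi> t)"
        by (rule cont_sint[OF continuous_on_mult[OF continuous_on_const \<psi>c]])
      have "(\<lambda>n. LINT t:II|lborel. cmod (P (r n) t - \<psi> t)) \<longlonglongrightarrow> (LINT t:II|lborel. cmod (\<psi> t - \<psi> t))"
      proof (rule DC_II)
        show "set_borel_measurable lborel II (\<lambda>t. cmod (P (r n) t - \<psi> t))" for n
          by (rule cont_sbm[OF continuous_on_norm[OF continuous_on_diff[OF PcP \<psi>c]]])
        show "set_borel_measurable lborel II (\<lambda>t. cmod (\<psi> t - \<psi> t))" by (simp add: set_borel_measurable_def)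
        show "norm (cmod (P (r n) t - \<psi> t)) \<le> 2 * Mb" for n t
        proof -
          have "cmod (\<psi> t) \<le> Mb"
            using conv[of t] PMP by (intro LIMSEQ_le_const2[OF tendsto_norm]) auto
          then show ?thesis using PMP[of "r n" t] norm_triangle_ineq4[of "P (r n) t" "\<psi> t"] by simp
        qed
        show "(\<lambda>n. cmod (P (r n) t - \<psi> t)) \<longlonglongrightarrow> cmod (\<psi> t - \<psi> t)" for t
          by (intro tendsto_norm tendsto_diff tendsto_const l1[of ] LIMSEQ_subseq_LIMSEQ[OF conv r, unfolded o_def])
      qed
      then have z: "(\<lambda>n. LINT t:II|lborel. cmod (P (r n) t - \<psi> t)) \<longlonglongrightarrow> 0" by simp
      have "(LINT t:II|lborel. cmod (\<i> * complex_of_real a * P (r n) t - \<i> * complex_of_real a * \<psi> t))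
          = a * (LINT t:II|lborel. cmod (P (r n) t - \<psi> t))" for n
      proof -
        have "(\<lambda>t. cmod (\<i> * complex_of_real a * P (r n) t - \<i> * complex_of_real a * \<psi> t)) = (\<lambda>t. a * cmod (P (r n) t - \<psi> t))"
        proof (rule ext)
          fix t
          have "\<i> * complex_of_real a * P (r n) t - \<i> * complex_of_real a * \<psi> t = (\<i> * complex_of_real a) * (P (r n) t - \<psi> t)"
            by (simp add: algebra_simps)
          then show "cmod (\<i> * complex_of_real a * P (r n) t - \<i> * complex_of_real a * \<psi> t) = a * cmod (P (r n) t - \<psi> t)"
            using assms(1) by (simp add: norm_mult)
        qed
        then show ?thesis by (simp add: set_integral_mult_right)
      qed
      then show "(\<lambda>n. LINT t:II|lborel. cmod (\<i> * complex_of_real a * P (r n) t - \<i> * complex_of_real a * \<psi> t)) \<longlonglongrightarrow> 0"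
        using tendsto_mult[OF tendsto_const z, of a] by simp
    qed
    have "(\<lambda>i. P (r i) x) \<longlonglongrightarrow> \<psi> (-pi) + ((LINT t:{-pi..x}|lborel. V t) + (LINT t:{-pi..x}|lborel. \<i> * complex_of_real a * \<psi> t))"
      unfolding eqj by (intro tendsto_add l2 l3 l4)
    then have "\<psi> x = \<psi> (-pi) + ((LINT t:{-pi..x}|lborel. V t) + (LINT t:{-pi..x}|lborel. \<i> * complex_of_real a * \<psi> t))"
      by (rule LIMSEQ_unique[OF l1])
    also have "(LINT t:{-pi..x}|lborel. V t) + (LINT t:{-pi..x}|lborel. \<i> * complex_of_real a * \<psi> t) = (LINT t:{-pi..x}|lborel. g t)"
      unfolding g_def by (rule set_integral_add(2)[OF iV iPs, symmetric])
    finally show ?thesis .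
  qed
  have Hpsi: "H1_with_deriv \<psi> g"
    unfolding H1_with_deriv_def using \<psi>per Lg formula unfolding L2_def by blast
  have admpsi: "admissible \<psi> g" unfolding admissible_def using Hpsi c\<psi> by simp
  have kinpsi: "kin a \<psi> g = (LINT x:II|lborel. (cmod (V x))\<^sup>2)"
    unfolding kin_def g_def by simp
  have kinU: "kin a (P j) (Q j) = (LINT x:II|lborel. (cmod (U j x))\<^sup>2)" for j unfolding kin_def U_def ..
  have "kin a \<psi> g \<le> 2*pi*(lambda_ap a p \<mu> - \<mu> * Lp_norm_sq p \<psi>)"
    unfolding kinpsi by (rule Vb) (use kinP in \<open>simp add: kinU\<close>)
  then have "energy a p \<mu> \<psi> g \<le> lambda_ap a p \<mu>" unfolding energy_kin by (simp add: field_simps)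
  moreover have "lambda_ap a p \<mu> \<le> energy a p \<mu> \<psi> g" by (rule lambda_le[OF admpsi p])
  ultimately show ?thesis using admpsi by (intro exI[of _ \<psi>] exI[of _ g]) simp
qed


end
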